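(* Let $n,s$ be integers with $0\le s\le n$ and let $a,b,d,z\in\mathbb C$ be such that all denominators below are nonzero. Then \begin{gather*} \frac{\big(q,a^2 q;q,p\big)_n}{(aqz, aq/z;q,p)_n}\frac{(bz, b/z;q,p)_s (dz, d/z;q,p)_{n-s}}{(ab, b/a;q,p)_s (ad, d/a;q,p)_{n-s}}\\ =\sum_{k=0}^{n} q^k\frac{\theta(a^2q^{2k};p)}{\theta(a^2;p)}\frac{(a^2,q^{-n},az,a/z,aq/b,aq/d,abq^s,adq^{n-s};q,p)_k}{(q,a^2q^{n+1},aq/z,aqz,ab,ad,aq^{1-s}/b,aq^{1-n+s}/d;q,p)_k}. \end{gather*} (The right-hand side is the very-well-poised series ${}_{12}V_{11}(a^2;q^{-n},az,a/z,aq/b,aq/d,abq^s,adq^{n-s};q,p)$.)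
   Context: Fix complex numbers $q,p$ with $0<|q|<1$, $|p|<1$. The modified Jacobi theta function is $\theta(x;p)=\prod_{j\ge0}(1-p^jx)(1-p^{j+1}/x)$ for $x\neq0$, and $\theta(x_1,\dots,x_r;p)=\prod_i\theta(x_i;p)$. The theta shifted factorial is $(a;q,p)_n=\prod_{k=0}^{n-1}\theta(aq^k;p)$ for $n\ge1$, $(a;q,p)_0=1$, and $(a_1,\dots,a_r;q,p)_n=\prod_i(a_i;q,p)_n$. *)

theory Defs
  imports "HOL-Analysis.Analysis"
begin

definition theta :: "complex \<Rightarrow> complex \<Rightarrow> complex" where
  "theta x p = (\<Prod>j. (1 - p ^ j * x) * (1 - p ^ (j + 1) / x))"

definition tfac :: "complex \<Rightarrow> complex \<Rightarrow> complex \<Rightarrow> nat \<Rightarrow> complex" where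
  "tfac a q p n = (\<Prod>k<n. theta (a * q ^ k) p)"

end

theory Submission
  imports Defs "HOL-Complex_Analysis.Complex_Analysis"
begin

definition Ap :: "complex \<Rightarrow> complex \<Rightarrow> complex" where
  "Ap p x = (\<Prod>j. 1 - p ^ j * x)"

lemma Ap_conv:
  fixes p x :: complex
  assumes "norm p < 1"
  shows "convergent_prod (\<lambda>j. 1 - p ^ j * x)"
proof -
  have "summable (\<lambda>j. norm ((1 - p ^ j * x) - 1))"
  proof -
    have "summable (\<lambda>j. norm x * norm p ^ j)"
      using assms by (intro summable_mult summable_geometric) auto
    moreover have "(\<lambda>j. norm ((1 - p ^ j * x) - 1)) = (\<lambda>j. norm x * norm p ^ j)"
    proof (rule ext)
      fix j
      have "norm ((1 - p ^ j * x) - 1) = norm (p ^ j * x)" by simp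
      also have "\<dots> = norm (p ^ j) * norm x" by (rule norm_mult)
      also have "\<dots> = norm x * norm p ^ j" by (simp add: norm_power)
      finally show "norm ((1 - p ^ j * x) - 1) = norm x * norm p ^ j" .
    qed
    ultimately show ?thesis by simp
  qed
  hence "abs_convergent_prod (\<lambda>j. 1 - p ^ j * x)"
    by (rule summable_imp_abs_convergent_prod)
  thus ?thesis by (rule abs_convergent_prod_imp_convergent_prod)
qed

lemma Ap_has_prod:
  fixes p x :: complex
  assumes "norm p < 1"
  shows "(\<lambda>j. 1 - p ^ j * x) has_prod Ap p x"
  unfolding Ap_def using Ap_conv[OF assms] by (rule convergent_prod_has_prod)

lemma Ap_shift:
  assumes "norm p < 1"
  shows "Ap p x = (1 - x) * Ap p (p * x)"
proof -
  have "(\<lambda>j. 1 - p ^ Suc j * x) has_prod Ap p (p * x)"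
    using Ap_has_prod[OF assms, of "p*x"] by (simp add: mult.assoc mult.left_commute)
  hence "(\<lambda>j. 1 - p ^ j * x) has_prod (Ap p (p * x) * (1 - p ^ 0 * x))"
    by (rule has_prod_Suc_imp[where f="\<lambda>j. 1 - p ^ j * x"])
  hence "Ap p (p * x) * (1 - x) = Ap p x"
    using has_prod_unique Ap_def by (metis mult_1 power_0)
  thus ?thesis by (simp add: mult.commute)
qed

lemma theta_Ap:
  assumes "norm p < 1"
  shows "theta x p = Ap p x * Ap p (p / x)"
proof -
  have "(\<lambda>j. (1 - p ^ j * x) * (1 - p ^ j * (p / x))) has_prod (Ap p x * Ap p (p / x))"
    by (intro has_prod_mult Ap_has_prod assms)
  moreover have "(\<lambda>j. (1 - p ^ j * x) * (1 - p ^ j * (p / x))) = (\<lambda>j. (1 - p ^ j * x) * (1 - p ^ (j + 1) / x))"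
    by (rule ext) (simp add: mult.commute)
  ultimately have "(\<lambda>j. (1 - p ^ j * x) * (1 - p ^ (j + 1) / x)) has_prod (Ap p x * Ap p (p / x))"
    by simp
  from has_prod_unique[OF this] show ?thesis unfolding theta_def by simp
qed

lemma Ap_zero_iff:
  fixes p x :: complex
  assumes "norm p < 1"
  shows "Ap p x = 0 \<longleftrightarrow> (\<exists>j. p ^ j * x = 1)"
proof -
  have "0 \<in> range (\<lambda>j. 1 - p ^ j * x) \<longleftrightarrow> (\<exists>j. p ^ j * x = 1)"
  proof
    assume "0 \<in> range (\<lambda>j. 1 - p ^ j * x)"
    then obtain j where "0 = 1 - p ^ j * x" by blast
    thus "\<exists>j. p ^ j * x = 1" by (intro exI[of _ j]) simp
  next
    assume "\<exists>j. p ^ j * x = 1"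
    then obtain j where "p ^ j * x = 1" by blast
    hence "0 = 1 - p ^ j * x" by simp
    thus "0 \<in> range (\<lambda>j. 1 - p ^ j * x)" by blast
  qed
  thus ?thesis unfolding Ap_def
    using has_prod_eq_0_iff[OF Ap_has_prod[OF assms, of x]] unfolding Ap_def by simp
qed

lemma Ap_p_nonzero:
  assumes "norm p < 1"
  shows "Ap p p \<noteq> 0"
proof
  assume "Ap p p = 0"
  then obtain j where j: "p ^ j * p = 1" using Ap_zero_iff[OF assms] by blast
  have "norm (p ^ j * p) = norm p * norm p ^ j" by (simp add: norm_mult norm_power)
  also have "\<dots> \<le> norm p * 1"
    using assms by (intro mult_left_mono power_le_one) auto
  also have "\<dots> < 1" using assms by simp
  finally show False using j by simp
qed

lemma theta_one: "norm p < 1 \<Longrightarrow> theta 1 p = 0"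
  by (simp add: theta_Ap Ap_zero_iff) (metis mult_1 power_0)

lemma theta_inv:
  assumes "norm p < 1" "x \<noteq> 0"
  shows "theta (1 / x) p = - theta x p / x"
proof -
  have e1: "theta (1/x) p = Ap p (1/x) * Ap p (p * x)"
    using assms by (simp add: theta_Ap)
  have e2: "Ap p (1/x) = (1 - 1/x) * Ap p (p * (1 / x))"
    by (rule Ap_shift[OF assms(1)])
  have e3: "theta x p = (1 - x) * Ap p (p * x) * Ap p (p / x)"
    using Ap_shift[OF assms(1), of x] theta_Ap[OF assms(1), of x] by simp
  have e4: "p * (1 / x) = p / x" by simp
  have e5: "1 - 1 / x = - (1 - x) / x" using assms(2) by (simp add: field_simps)
  have e6: "\<And>A1 A2. (- (1 - x) / x) * A1 * A2 = - ((1 - x) * A2 * A1) / x"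
    by (simp add: field_simps)
  show ?thesis unfolding e1 e2 e3 e4 e5 by (rule e6)
qed

lemma theta_pshift:
  assumes "norm p < 1" "x \<noteq> 0" "p \<noteq> 0"
  shows "theta (p * x) p = - theta x p / x"
proof -
  have e1: "theta (p*x) p = Ap p (p * x) * Ap p (1 / x)"
    using assms theta_Ap[OF assms(1), of "p*x"] by simp
  have e2: "Ap p (1/x) = (1 - 1/x) * Ap p (p * (1 / x))"
    by (rule Ap_shift[OF assms(1)])
  have e3: "theta x p = (1 - x) * Ap p (p * x) * Ap p (p / x)"
    using Ap_shift[OF assms(1), of x] theta_Ap[OF assms(1), of x] by simp
  have e4: "p * (1 / x) = p / x" by simp
  have e5: "1 - 1 / x = - (1 - x) / x" using assms(2) by (simp add: field_simps)
  have e6: "\<And>A1 A2. A2 * ((- (1 - x) / x) * A1) = - ((1 - x) * A2 * A1) / x"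
    by (simp add: field_simps)
  show ?thesis unfolding e1 e2 e3 e4 e5 by (rule e6)
qed

lemma theta_zero_set:
  assumes "norm p < 1" "theta x p = 0"
  shows "x \<in> range (\<lambda>j. inverse (p ^ j)) \<union> range (\<lambda>j. p ^ Suc j)"
proof -
  from assms have "Ap p x = 0 \<or> Ap p (p / x) = 0" by (simp add: theta_Ap)
  then show ?thesis
  proof
    assume "Ap p x = 0"
    then obtain j where "p ^ j * x = 1" using Ap_zero_iff[OF assms(1)] by blast
    hence "x = inverse (p ^ j)" by (metis inverse_unique mult.commute)
    thus ?thesis by blast
  next
    assume "Ap p (p / x) = 0"
    then obtain j where j: "p ^ j * (p / x) = 1" using Ap_zero_iff[OF assms(1)] by blast
    hence "x \<noteq> 0" by auto
    with j have "x = p ^ Suc j" by (simp add: field_simps)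
    thus ?thesis by blast
  qed
qed

lemma Ap_uniform:
  assumes p: "norm p < 1"
  shows "uniform_limit (cball 0 R) (\<lambda>N x. \<Prod>j<N. 1 - p ^ j * x) (Ap p) sequentially"
proof -
  have "uniformly_convergent_on (cball 0 R) (\<lambda>N x. \<Prod>j<N. 1 - p ^ j * x)"
  proof (rule uniformly_convergent_on_prod')
    show "uniformly_convergent_on (cball 0 R) (\<lambda>N x. \<Sum>n<N. norm ((1 - p ^ n * x) - 1))"
    proof (rule Weierstrass_m_test')
      fix n x assume x: "x \<in> cball (0::complex) R"
      have "norm (norm ((1 - p ^ n * x) - 1)) = norm p ^ n * norm x"
        by (simp add: norm_mult norm_power)
      also have "\<dots> \<le> norm p ^ n * R"
        using x by (intro mult_left_mono) auto
      finally show "norm (norm ((1 - p ^ n * x) - 1)) \<le> R * norm p ^ n" by (simp add: mult.commute)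
    next
      show "summable (\<lambda>n. R * norm p ^ n)"
        using p by (intro summable_mult summable_geometric) auto
    qed
  qed (auto intro!: continuous_intros)
  then obtain g where g: "uniform_limit (cball 0 R) (\<lambda>N x. \<Prod>j<N. 1 - p ^ j * x) g sequentially"
    by (auto simp: uniformly_convergent_on_def)
  also have "?this \<longleftrightarrow> uniform_limit (cball 0 R) (\<lambda>N x. \<Prod>j<N. 1 - p ^ j * x) (Ap p) sequentially"
  proof (rule uniform_limit_cong')
    fix x :: complex assume "x \<in> cball 0 R"
    hence "(\<lambda>N. \<Prod>j<N. 1 - p ^ j * x) \<longlonglongrightarrow> g x"
      using tendsto_uniform_limitI[OF g] by blast
    moreover have "(\<lambda>N. \<Prod>j<N. 1 - p ^ j * x) \<longlonglongrightarrow> Ap p x"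
      by (rule has_prod_imp_tendsto'[OF Ap_has_prod[OF p]])
    ultimately show "g x = Ap p x" using tendsto_unique by force
  qed auto
  finally show ?thesis .
qed

lemma Ap_holomorphic: 
  assumes p: "norm p < 1"
  shows "Ap p holomorphic_on A"
proof (rule holomorphic_on_subset)
  show "Ap p holomorphic_on UNIV"
  proof (rule holomorphic_uniform_sequence)
    fix z :: complex
    have *: "uniform_limit (cball 0 (norm z + 1)) (\<lambda>N x. \<Prod>j<N. 1 - p ^ j * x) (Ap p) sequentially"
      by (rule Ap_uniform[OF p])
    hence "uniform_limit (cball z 1) (\<lambda>N x. \<Prod>j<N. 1 - p ^ j * x) (Ap p) sequentially"
      by (rule uniform_limit_on_subset) (simp add: cball_subset_cball_iff)
    thus "\<exists>d>0. cball z d \<subseteq> UNIV \<and> uniform_limit (cball z d) (\<lambda>N x. \<Prod>j<N. 1 - p ^ j * x) (Ap p) sequentially"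
      by (intro exI[of _ 1]) auto
  qed (auto intro!: holomorphic_intros)
qed auto

lemma Ap_analytic: "norm p < 1 \<Longrightarrow> Ap p analytic_on A"
  using Ap_holomorphic[of p UNIV] analytic_on_holomorphic by blast

lemma theta_analytic:
  assumes p: "norm p < 1" and f: "f analytic_on A" and nz: "\<And>x. x \<in> A \<Longrightarrow> f x \<noteq> 0"
  shows "(\<lambda>x. theta (f x) p) analytic_on A"
proof -
  have "(\<lambda>x. Ap p (f x) * Ap p (p / f x)) analytic_on A"
    by (intro analytic_intros analytic_on_compose_gen[OF _ Ap_analytic[OF p], of _ _ UNIV, unfolded o_def] f nz) auto
  thus ?thesis by (simp add: theta_Ap[OF p])
qed

lemma theta_isCont:
  assumes p: "norm p < 1" and x: "x \<noteq> 0"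
  shows "isCont (\<lambda>x. theta x p) x"
proof -
  have "(\<lambda>x. theta x p) analytic_on (-{0})"
    using theta_analytic[OF p, of "\<lambda>x. x" "-{0}"] by (auto intro: analytic_intros)
  hence "(\<lambda>x. theta x p) analytic_on {x}"
    by (rule analytic_on_subset) (use x in auto)
  thus ?thesis by (rule analytic_at_imp_isCont)
qed

lemma theta_continuous [continuous_intros]:
  assumes p: "norm p < 1" and f: "continuous (at x within s) f" and nz: "f x \<noteq> 0"
  shows "continuous (at x within s) (\<lambda>x. theta (f x) p)"
  using continuous_within_compose3[OF theta_isCont[OF p nz] f] by (simp add: o_def)

lemma qper_iter:
  fixes H :: "complex \<Rightarrow> complex"
  assumes p: "p \<noteq> 0" and per: "\<And>z. z \<noteq> 0 \<Longrightarrow> H (p * z) = H z" and z: "z \<noteq> 0"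
  shows "H (p ^ k * z) = H z \<and> H (z / p ^ k) = H z"
proof (induction k)
  case 0 thus ?case by simp
next
  case (Suc k)
  have "H (p ^ Suc k * z) = H (p * (p ^ k * z))" by (simp add: mult.assoc)
  also have "\<dots> = H (p ^ k * z)" using p z by (intro per) simp
  finally have 1: "H (p ^ Suc k * z) = H z" using Suc by simp
  have "H (z / p ^ k) = H (p * (z / p ^ Suc k))" using p by (simp add: field_simps)
  also have "\<dots> = H (z / p ^ Suc k)" using p z by (intro per) simp
  finally have 2: "H (z / p ^ Suc k) = H z" using Suc by simp
  from 1 2 show ?case ..
qed

lemma qper_fund:
  fixes H :: "complex \<Rightarrow> complex"
  assumes p: "p \<noteq> 0" "norm p < 1" and per: "\<And>z. z \<noteq> 0 \<Longrightarrow> H (p * z) = H z" and z: "z \<noteq> 0"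
  shows "\<exists>y. norm p \<le> norm y \<and> norm y \<le> 1 \<and> H y = H z"
proof -
  have np: "0 < norm p" using p by simp
  have nz: "0 < norm z" using z by simp
  consider "norm z > 1" | "norm z < norm p" | "norm p \<le> norm z \<and> norm z \<le> 1" by linarith
  thus ?thesis
  proof cases
    case 1
    obtain k where k: "norm p ^ k < 1 / norm z" using real_arch_pow_inv[of "1 / norm z" "norm p"] p nz by auto
    define P where "P = (\<lambda>k. norm p ^ k * norm z \<le> 1)"
    have Pk: "P k" using k nz by (simp add: P_def field_simps)
    define k0 where "k0 = (LEAST k. P k)"
    have Pk0: "P k0" unfolding k0_def by (rule LeastI[of P k, OF Pk])
    have k0pos: "k0 \<noteq> 0"
    proof
      assume "k0 = 0" with Pk0 1 show False by (simp add: P_def)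
    qed
    then obtain m where m: "k0 = Suc m" by (cases k0) auto
    have "\<not> P m" using not_less_Least[of m P] m k0_def by auto
    hence "norm p ^ m * norm z > 1" by (simp add: P_def)
    hence "norm p * (norm p ^ m * norm z) \<ge> norm p * 1" using np by (intro mult_left_mono) auto
    hence "norm p ^ k0 * norm z \<ge> norm p" using m by (simp add: mult.assoc)
    moreover have "norm (p ^ k0 * z) = norm p ^ k0 * norm z" by (simp add: norm_mult norm_power)
    ultimately show ?thesis using Pk0 qper_iter[where H=H and p=p and z=z and k=k0, OF p(1) per z] unfolding P_def
      by (intro exI[of _ "p ^ k0 * z"]) auto
  next
    case 2
    obtain k where k: "norm p ^ k < norm z" using real_arch_pow_inv[of "norm z" "norm p"] p nz by auto
    define P where "P = (\<lambda>k. norm p ^ Suc k \<le> norm z)"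
    have Pk: "P k" unfolding P_def using k np
      by (smt (verit, ccfv_SIG) mult_left_le_one_le norm_ge_zero p(2) power_Suc zero_le_power)
    define k0 where "k0 = (LEAST k. P k)"
    have Pk0: "P k0" unfolding k0_def by (rule LeastI[of P k, OF Pk])
    have k0pos: "k0 \<noteq> 0"
    proof
      assume "k0 = 0" with Pk0 2 show False by (simp add: P_def)
    qed
    then obtain m where m: "k0 = Suc m" by (cases k0) auto
    have "\<not> P m" using not_less_Least[of m P] m k0_def by auto
    hence lt: "norm p ^ k0 > norm z" by (simp add: P_def m)
    have pos: "norm p ^ k0 > 0" using np by simp
    have "norm (z / p ^ k0) = norm z / norm p ^ k0" by (simp add: norm_divide norm_power)
    moreover have "norm z / norm p ^ k0 \<le> 1" using lt pos by (simp add: field_simps)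
    moreover have "norm p \<le> norm z / norm p ^ k0" using Pk0 pos by (simp add: P_def field_simps)
    ultimately show ?thesis using qper_iter[where H=H and p=p and z=z and k=k0, OF p(1) per z]
      by (intro exI[of _ "z / p ^ k0"]) auto
  next
    case 3 thus ?thesis by blast
  qed
qed

lemma qper_const:
  fixes H :: "complex \<Rightarrow> complex"
  assumes p: "p \<noteq> 0" "norm p < 1" and H: "H holomorphic_on (-{0})"
    and per: "\<And>z. z \<noteq> 0 \<Longrightarrow> H (p * z) = H z" and z: "z \<noteq> 0"
  shows "H z = H 1"
proof -
  define K where "K = cball (0::complex) 1 - ball 0 (norm p)"
  have K: "compact K" unfolding K_def by (intro compact_diff) auto
  have K0: "K \<subseteq> -{0}" using p by (auto simp: K_def)
  have "continuous_on K H" using H K0 holomorphic_on_imp_continuous_on holomorphic_on_subset by blast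
  hence "bounded (H ` K)" using K by (intro compact_imp_bounded compact_continuous_image)
  then obtain M where M: "\<And>y. y \<in> K \<Longrightarrow> norm (H y) \<le> M" by (auto simp: bounded_iff)
  have bd: "norm (H w) \<le> M" if w: "w \<noteq> 0" for w
  proof -
    obtain y where y: "norm p \<le> norm y" "norm y \<le> 1" "H y = H w" using qper_fund[where H=H and p=p and z=w, OF p per w] by blast
    hence "y \<in> K" by (auto simp: K_def)
    thus ?thesis using M y by force
  qed
  define G where "G = (\<lambda>w. H (exp w))"
  have "G holomorphic_on UNIV"
    unfolding G_def by (rule holomorphic_on_compose_gen[OF _ H, unfolded o_def]) (auto intro: holomorphic_intros)
  moreover have "bounded (range G)" unfolding G_def bounded_iff using bd by (intro exI[of _ M]) auto
  ultimately have "G constant_on UNIV" by (rule Liouville_theorem)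
  then obtain c where c: "\<And>w. G w = c" by (auto simp: constant_on_def)
  have "H z = G (Ln z)" using z by (simp add: G_def)
  also have "\<dots> = G (Ln 1)" by (simp add: c)
  also have "\<dots> = H 1" by (simp add: G_def)
  finally show ?thesis .
qed

lemma countable_avoid_seq:
  fixes a :: complex
  assumes "countable C"
  shows "\<exists>X. (\<forall>n. X n \<notin> C) \<and> X \<longlonglongrightarrow> a"
proof -
  have "\<exists>x. x \<in> ball a (1 / Suc n) \<and> x \<notin> C" for n
  proof (rule ccontr)
    assume "\<not> ?thesis"
    hence "ball a (1 / Suc n) \<subseteq> C" by auto
    hence "countable (ball a (1 / Suc n))" using assms countable_subset by blast
    thus False using uncountable_ball[of "1 / Suc n" a] by simp
  qed
  then obtain X where X: "\<And>n. X n \<in> ball a (1 / Suc n) \<and> X n \<notin> C" by metis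
  have "X \<longlonglongrightarrow> a"
  proof (rule metric_LIMSEQ_I)
    fix r :: real assume r: "r > 0"
    obtain N where N: "1 / Suc N < r" using reals_Archimedean[OF r] by (auto simp: field_simps)
    show "\<exists>no. \<forall>n\<ge>no. dist (X n) a < r"
    proof (intro exI allI impI)
      fix n assume "n \<ge> N"
      hence "1 / real (Suc n) \<le> 1 / Suc N" by (intro divide_left_mono) auto
      thus "dist (X n) a < r" using X[of n] N by (auto simp: dist_commute)
    qed
  qed
  thus ?thesis using X by blast
qed

lemma lim_transfer:
  fixes Hf :: "complex \<Rightarrow> complex"
  assumes p: "p \<noteq> 0" and per: "\<And>y. Hf (p * y) = Hf y"
  shows "Hf \<midarrow>z\<rightarrow> c \<longleftrightarrow> Hf \<midarrow>(p * z)\<rightarrow> c"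
proof
  assume h: "Hf \<midarrow>z\<rightarrow> c"
  have "(\<lambda>x. Hf (x / p)) \<midarrow>(p * z)\<rightarrow> c"
  proof (rule LIM_compose2[OF _ h])
    show "(\<lambda>x. x / p) \<midarrow>(p * z)\<rightarrow> z" using p by (auto intro!: tendsto_eq_intros)
    show "\<exists>d>0. \<forall>x. x \<noteq> p * z \<and> norm (x - p * z) < d \<longrightarrow> x / p \<noteq> z"
      using p by (intro exI[of _ 1]) (auto simp: field_simps)
  qed
  moreover have "Hf (x / p) = Hf x" for x using per[of "x / p"] p by simp
  ultimately show "Hf \<midarrow>(p * z)\<rightarrow> c" by simp
next
  assume h: "Hf \<midarrow>(p * z)\<rightarrow> c"
  have "(\<lambda>x. Hf (p * x)) \<midarrow>z\<rightarrow> c"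
  proof (rule LIM_compose2[OF _ h])
    show "(\<lambda>x. p * x) \<midarrow>z\<rightarrow> p * z" by (auto intro!: tendsto_eq_intros)
    show "\<exists>d>0. \<forall>x. x \<noteq> z \<and> norm (x - z) < d \<longrightarrow> p * x \<noteq> p * z"
      using p by (intro exI[of _ 1]) auto
  qed
  thus "Hf \<midarrow>z\<rightarrow> c" using per by simp
qed

lemma lim_orbit:
  fixes Hf :: "complex \<Rightarrow> complex"
  assumes p: "p \<noteq> 0" and per: "\<And>y. Hf (p * y) = Hf y" and h: "Hf \<midarrow>w\<rightarrow> c"
  shows "Hf \<midarrow>(w * p ^ k)\<rightarrow> c \<and> Hf \<midarrow>(w / p ^ k)\<rightarrow> c"
proof (induction k)
  case 0 thus ?case using h by simp
next
  case (Suc k)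
  have 1: "Hf \<midarrow>(w * p ^ Suc k)\<rightarrow> c"
    using lim_transfer[where Hf=Hf and p=p and z="w * p ^ k" and c=c, OF p per] Suc by (simp add: mult_ac)
  have "Hf \<midarrow>(p * (w / p ^ Suc k))\<rightarrow> c" using Suc p by (simp add: field_simps)
  hence 2: "Hf \<midarrow>(w / p ^ Suc k)\<rightarrow> c" using lim_transfer[where Hf=Hf and p=p and z="w / p ^ Suc k" and c=c, OF p per] by blast
  from 1 2 show ?case ..
qed

lemma lim_quot:
  fixes F R K :: "complex \<Rightarrow> complex"
  assumes F: "(F has_field_derivative D) (at w)" and Fw: "F w = 0"
    and K: "isCont K w" "K w \<noteq> 0"
    and R: "eventually (\<lambda>x. R x = (x - w) * K x) (at w)"
  shows "(\<lambda>x. F x / R x) \<midarrow>w\<rightarrow> D / K w"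
proof -
  have "(\<lambda>y. (F y - F w) / (y - w)) \<midarrow>w\<rightarrow> D" using F by (simp add: has_field_derivative_iff)
  hence "(\<lambda>y. (F y - F w) / (y - w) / K y) \<midarrow>w\<rightarrow> D / K w"
    using K by (intro tendsto_divide) (auto simp: isCont_def)
  moreover have "eventually (\<lambda>x. (F x - F w) / (x - w) / K x = F x / R x) (at w)"
    using R eventually_neq_at_within[of w w UNIV]
    by eventually_elim (simp add: Fw)
  ultimately show ?thesis by (rule Lim_transform_eventually)
qed

definition Fadd :: "complex \<Rightarrow> complex \<Rightarrow> complex \<Rightarrow> complex \<Rightarrow> complex \<Rightarrow> complex" where
  "Fadd x y u v p = theta (x*y) p * theta (x/y) p * theta (u* v) p * theta (u/v) p
     - theta (x* v) p * theta (x/v) p * theta (u*y) p * theta (u/y) p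
     - (u/y) * theta (y* v) p * theta (y/v) p * theta (x*u) p * theta (x/u) p"

lemma Ap_isCont: "norm p < 1 \<Longrightarrow> isCont (Ap p) x"
  using Ap_analytic[of p "{x}"] analytic_at_imp_isCont by blast

lemma Ap_continuous [continuous_intros]:
  assumes p: "norm p < 1" and f: "continuous (at x within s) f"
  shows "continuous (at x within s) (\<lambda>x. Ap p (f x))"
  using continuous_within_compose3[OF Ap_isCont[OF p] f] by (simp add: o_def)

lemma theta_pair_pshift:
  assumes p: "norm p < 1" "p \<noteq> 0" and x: "x \<noteq> 0" and c: "c \<noteq> 0"
  shows "theta ((p*x)*c) p * theta ((p*x)/c) p = theta (x*c) p * theta (x/c) p / x^2"
proof -
  have 1: "theta ((p*x)*c) p = - theta (x*c) p / (x*c)"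
    using theta_pshift[OF p(1) _ p(2), of "x*c"] x c by (simp add: mult.assoc)
  have 2: "theta ((p*x)/c) p = - theta (x/c) p / (x/c)"
    using theta_pshift[OF p(1) _ p(2), of "x/c"] x c by (simp add: times_divide_eq_right)
  show ?thesis unfolding 1 2 using x c by (simp add: field_simps power2_eq_square)
qed

lemma theta_pair_inv:
  assumes p: "norm p < 1" and u: "u \<noteq> 0" and c: "c \<noteq> 0"
  shows "theta ((1/u)*c) p * theta ((1/u)/c) p = theta (u*c) p * theta (u/c) p / u^2"
proof -
  have 1: "theta ((1/u)*c) p = - theta (u/c) p / (u/c)"
    using theta_inv[OF p, of "u/c"] u c by simp
  have 2: "theta ((1/u)/c) p = - theta (u*c) p / (u*c)"
    using theta_inv[OF p, of "u*c"] u c by simp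
  show ?thesis unfolding 1 2 using u c by (simp add: field_simps power2_eq_square)
qed

lemma Fadd_pshift:
  assumes p: "norm p < 1" "p \<noteq> 0" and nz: "x \<noteq> 0" "y \<noteq> 0" "u \<noteq> 0" "v \<noteq> 0"
  shows "Fadd (p*x) y u v p = Fadd x y u v p / x^2"
proof -
  note e = theta_pair_pshift[OF p nz(1)]
  have "Fadd (p*x) y u v p =
     (theta ((p*x)*y) p * theta ((p*x)/y) p) * theta (u* v) p * theta (u/v) p
     - (theta ((p*x)* v) p * theta ((p*x)/v) p) * theta (u*y) p * theta (u/y) p
     - (u/y) * theta (y* v) p * theta (y/v) p * (theta ((p*x)*u) p * theta ((p*x)/u) p)"
    by (simp add: Fadd_def mult_ac)
  also have "\<dots> = (theta (x*y) p * theta (x/y) p / x^2) * theta (u* v) p * theta (u/v) p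
     - (theta (x* v) p * theta (x/v) p / x^2) * theta (u*y) p * theta (u/y) p
     - (u/y) * theta (y* v) p * theta (y/v) p * (theta (x*u) p * theta (x/u) p / x^2)"
    using nz by (simp add: e)
  also have "\<dots> = Fadd x y u v p / x^2"
    unfolding Fadd_def using nz by (simp add: field_simps)
  finally show ?thesis .
qed

lemma Fadd_at_u: "norm p < 1 \<Longrightarrow> u \<noteq> 0 \<Longrightarrow> Fadd u y u v p = 0"
  by (simp add: Fadd_def theta_one mult_ac)

lemma Fadd_at_inv_u:
  assumes p: "norm p < 1" and nz: "y \<noteq> 0" "u \<noteq> 0" "v \<noteq> 0"
  shows "Fadd (1/u) y u v p = 0"
proof -
  have "Fadd (1/u) y u v p =
     (theta ((1/u)*y) p * theta ((1/u)/y) p) * theta (u* v) p * theta (u/v) p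
     - (theta ((1/u)* v) p * theta ((1/u)/v) p) * theta (u*y) p * theta (u/y) p
     - (u/y) * theta (y* v) p * theta (y/v) p * (theta ((1/u)*u) p * theta ((1/u)/u) p)"
    unfolding Fadd_def by (simp only: mult_ac)
  also have "\<dots> = (theta (u*y) p * theta (u/y) p / u^2) * theta (u* v) p * theta (u/v) p
     - (theta (u* v) p * theta (u/v) p / u^2) * theta (u*y) p * theta (u/y) p
     - (u/y) * theta (y* v) p * theta (y/v) p * (theta ((1/u)*u) p * theta ((1/u)/u) p)"
    by (simp only: theta_pair_inv[OF p nz(2) nz(1)] theta_pair_inv[OF p nz(2) nz(3)])
  also have "theta ((1/u)*u) p = 0" using nz p by (simp add: theta_one)
  finally show ?thesis by simp
qed

lemma Fadd_at_v:
  assumes p: "norm p < 1" and nz: "y \<noteq> 0" "u \<noteq> 0" "v \<noteq> 0"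
  shows "Fadd v y u v p = 0"
proof -
  have 1: "theta (v/y) p = - theta (y/v) p / (y/v)"
    using theta_inv[OF p, of "y/v"] nz by simp
  have 2: "theta (v/u) p = - theta (u/v) p / (u/v)"
    using theta_inv[OF p, of "u/v"] nz by simp
  have 3: "theta (v/v) p = 0" using nz p by (simp add: theta_one)
  show ?thesis unfolding Fadd_def 1 2 3 using nz by (simp add: field_simps mult_ac)
qed

lemma zero_orbit:
  fixes G :: "complex \<Rightarrow> complex"
  assumes p: "p \<noteq> 0" and per: "\<And>z. z \<noteq> 0 \<Longrightarrow> G (p * z) = G z / z^2" and w: "w \<noteq> 0" "G w = 0"
  shows "G (w * p ^ k) = 0 \<and> G (w / p ^ k) = 0"
proof (induction k)
  case 0 thus ?case using w by simp
next
  case (Suc k)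
  have "G (w * p ^ Suc k) = G (p * (w * p ^ k))" by (simp add: mult_ac)
  also have "\<dots> = 0" using per[of "w * p ^ k"] Suc p w by simp
  finally have 1: "G (w * p ^ Suc k) = 0" .
  have "G (p * (w / p ^ Suc k)) = G (w / p ^ k)" using p by (simp add: field_simps)
  hence "G (w / p ^ Suc k) / (w / p ^ Suc k)^2 = 0" using per[of "w / p ^ Suc k"] Suc p w by simp
  hence 2: "G (w / p ^ Suc k) = 0" using p w by simp
  from 1 2 show ?case ..
qed


lemma zero_cases:
  assumes p: "norm p < 1" and u: "u \<noteq> 0" and R: "theta (x * u) p * theta (x / u) p = 0"
  shows "(\<exists>j. x = u / p ^ j) \<or> (\<exists>j. x = u * p ^ j) \<or> (\<exists>j. x = (1/u) / p ^ j) \<or> (\<exists>j. x = (1/u) * p ^ j)"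
proof -
  from R have "theta (x / u) p = 0 \<or> theta (x * u) p = 0" by auto
  thus ?thesis
  proof
    assume "theta (x / u) p = 0"
    from theta_zero_set[OF p this] obtain j where "x / u = inverse (p ^ j) \<or> x / u = p ^ Suc j" by blast
    thus ?thesis
    proof
      assume "x / u = inverse (p ^ j)"
      moreover have "x = u * (x / u)" using u by simp
      ultimately have "x = u / p ^ j" by (simp add: divide_inverse)
      thus ?thesis by blast
    next
      assume "x / u = p ^ Suc j"
      moreover have "x = u * (x / u)" using u by simp
      ultimately have "x = u * p ^ Suc j" by simp
      thus ?thesis by blast
    qed
  next
    assume "theta (x * u) p = 0"
    from theta_zero_set[OF p this] obtain j where "x * u = inverse (p ^ j) \<or> x * u = p ^ Suc j" by blast
    thus ?thesis
    proof
      assume "x * u = inverse (p ^ j)"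
      moreover have "x = (1/u) * (x * u)" using u by simp
      ultimately have "x = (1/u) / p ^ j" by (simp add: divide_inverse)
      thus ?thesis by blast
    next
      assume "x * u = p ^ Suc j"
      moreover have "x = (1/u) * (x * u)" using u by simp
      ultimately have "x = (1/u) * p ^ Suc j" by simp
      thus ?thesis by blast
    qed
  qed
qed

lemma Fadd_generic:
  assumes p: "norm p < 1" "p \<noteq> 0" and nz: "y \<noteq> 0" "u \<noteq> 0" "v \<noteq> 0"
    and g1: "theta (u * u) p \<noteq> 0" and g2: "theta (v * u) p * theta (v / u) p \<noteq> 0"
    and x: "x \<noteq> 0"
  shows "Fadd x y u v p = 0"
proof -
  define F where "F = (\<lambda>x. Fadd x y u v p)"
  define R where "R = (\<lambda>x. theta (x * u) p * theta (x / u) p)"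
  define H0 where "H0 = (\<lambda>x. F x / R x)"
  have Fan: "F analytic_on (-{0})" unfolding F_def Fadd_def using nz
    by (intro analytic_intros theta_analytic[OF p(1)]) auto
  have Ran: "R analytic_on (-{0})" unfolding R_def using nz
    by (intro analytic_intros theta_analytic[OF p(1)]) auto
  have Fper: "F (p * z) = F z / z^2" if "z \<noteq> 0" for z
    unfolding F_def by (rule Fadd_pshift[OF p that nz])
  have Rper: "R (p * z) = R z / z^2" if "z \<noteq> 0" for z
    unfolding R_def by (rule theta_pair_pshift[OF p that nz(2)])
  have H0per: "H0 (p * z) = H0 z" for z
  proof (cases "z = 0")
    case True thus ?thesis by simp
  next
    case False
    have e: "(a / z^2) / (b / z^2) = a / b" for a b
      using False by (cases "b = 0") (simp_all add: field_simps)
    show ?thesis unfolding H0_def Fper[OF False] Rper[OF False] by (rule e)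
  qed
  have Fu: "F u = 0" unfolding F_def by (rule Fadd_at_u[OF p(1) nz(2)])
  have Fiu: "F (1/u) = 0" unfolding F_def by (rule Fadd_at_inv_u[OF p(1) nz])
  have Fv: "F v = 0" unfolding F_def by (rule Fadd_at_v[OF p(1) nz])
  have isContF: "isCont F z" if "z \<noteq> 0" for z
    using analytic_on_subset[OF Fan, of "{z}"] that analytic_at_imp_isCont by auto
  have isContR: "isCont R z" if "z \<noteq> 0" for z
    using analytic_on_subset[OF Ran, of "{z}"] that analytic_at_imp_isCont by auto
  have lim_reg: "H0 \<midarrow>z\<rightarrow> H0 z" if "z \<noteq> 0" "R z \<noteq> 0" for z
  proof -
    have "isCont H0 z" unfolding H0_def using isContF[OF that(1)] isContR[OF that(1)] that(2)
      by (intro continuous_intros) auto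
    thus ?thesis by (simp add: isCont_def)
  qed
  have Fder: "(F has_field_derivative deriv F w) (at w)" if "w \<noteq> 0" for w
    using holomorphic_derivI[OF analytic_imp_holomorphic[OF Fan], of w UNIV] that by auto
  have lim_u: "\<exists>c. H0 \<midarrow>u\<rightarrow> c"
  proof -
    define K where "K = (\<lambda>x. - (theta (x * u) p * Ap p (p * (x / u)) * Ap p (p / (x / u))) / u)"
    have "H0 \<midarrow>u\<rightarrow> deriv F u / K u" unfolding H0_def
    proof (rule lim_quot[OF Fder[OF nz(2)] Fu])
      show "isCont K u" unfolding K_def using nz
        by (intro continuous_intros p(1)) auto
      have "K u = - (theta (u * u) p * Ap p p * Ap p p) / u" using nz by (simp add: K_def)
      thus "K u \<noteq> 0" using nz g1 Ap_p_nonzero[OF p(1)] by simp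
      show "eventually (\<lambda>x. R x = (x - u) * K x) (at u)"
      proof (rule always_eventually, rule allI)
        fix x
        have T: "theta (x / u) p = (1 - x / u) * Ap p (p * (x / u)) * Ap p (p / (x / u))"
          using theta_Ap[OF p(1), of "x/u"] Ap_shift[OF p(1), of "x/u"] by simp
        have alg: "\<And>a b c. a * ((1 - x/u) * b * c) = (x - u) * (- (a * b * c) / u)"
          using nz by (simp add: field_simps)
        show "R x = (x - u) * K x" unfolding R_def K_def T by (rule alg)
      qed
    qed
    thus ?thesis by blast
  qed
  have lim_iu: "\<exists>c. H0 \<midarrow>(1/u)\<rightarrow> c"
  proof -
    define K where "K = (\<lambda>x. - u * (Ap p (p * (x * u)) * Ap p (p / (x * u)) * theta (x / u) p))"
    have iu: "1/u \<noteq> 0" using nz by simp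
    have "H0 \<midarrow>(1/u)\<rightarrow> deriv F (1/u) / K (1/u)" unfolding H0_def
    proof (rule lim_quot[OF Fder[OF iu] Fiu])
      show "isCont K (1/u)" unfolding K_def using nz
        by (intro continuous_intros p(1)) auto
      have "theta ((1/u) / u) p = - theta (u * u) p / (u * u)"
        using theta_inv[OF p(1), of "u*u"] nz by simp
      hence "K (1/u) = - u * (Ap p p * Ap p p * (- theta (u * u) p / (u * u)))" using nz by (simp add: K_def)
      thus "K (1/u) \<noteq> 0" using nz g1 Ap_p_nonzero[OF p(1)] by simp
      show "eventually (\<lambda>x. R x = (x - 1/u) * K x) (at (1/u))"
      proof (rule always_eventually, rule allI)
        fix x
        have T: "theta (x * u) p = (1 - x * u) * Ap p (p * (x * u)) * Ap p (p / (x * u))"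
          using theta_Ap[OF p(1), of "x*u"] Ap_shift[OF p(1), of "x*u"] by simp
        have alg: "\<And>b1 b2 c. ((1 - x * u) * b1 * b2) * c = (x - 1/u) * (- u * (b1 * b2 * c))"
          using nz by (simp add: field_simps)
        show "R x = (x - 1/u) * K x" unfolding R_def K_def T by (rule alg)
      qed
    qed
    thus ?thesis by blast
  qed
  have lim_all: "\<exists>c. H0 \<midarrow>z\<rightarrow> c" if z: "z \<noteq> 0" for z
  proof (cases "R z = 0")
    case False thus ?thesis using lim_reg[OF z] by blast
  next
    case True
    from lim_u obtain c1 where c1: "H0 \<midarrow>u\<rightarrow> c1" by blast
    from lim_iu obtain c2 where c2: "H0 \<midarrow>(1/u)\<rightarrow> c2" by blast
    note o1 = lim_orbit[where Hf=H0 and p=p, OF p(2) H0per c1]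
    note o2 = lim_orbit[where Hf=H0 and p=p, OF p(2) H0per c2]
    from zero_cases[OF p(1) nz(2) True[unfolded R_def]] show ?thesis
      using o1 o2 by blast
  qed
  have mero: "H0 meromorphic_on (-{0})" unfolding H0_def
    by (intro meromorphic_on_divide analytic_on_imp_meromorphic_on Fan Ran)
  define Hh where "Hh = remove_sings H0"
  have Hhan: "Hh analytic_on (-{0})"
  proof (rule analytic_on_analytic_at[THEN iffD2], rule ballI)
    fix z :: complex assume z: "z \<in> -{0}"
    have z0: "z \<noteq> 0" using z by simp
    from lim_all[OF z0] obtain c where c: "H0 \<midarrow>z\<rightarrow> c" by blast
    have sub: "{z} \<subseteq> -{0}" using z0 by simp
    have "isolated_singularity_at H0 z"
      by (rule meromorphic_on_isolated_singularity[OF meromorphic_on_subset[OF mero sub]])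
    thus "Hh analytic_on {z}" unfolding Hh_def by (rule remove_sings_analytic_at[OF _ c])
  qed
  have Hhper: "Hh (p * z) = Hh z" if z: "z \<noteq> 0" for z
  proof -
    from lim_all[OF z] obtain c where c: "H0 \<midarrow>z\<rightarrow> c" by blast
    hence c': "H0 \<midarrow>(p*z)\<rightarrow> c" using lim_transfer[where Hf=H0 and p=p and z=z and c=c, OF p(2) H0per] by blast
    show ?thesis unfolding Hh_def using remove_sings_eqI[OF c] remove_sings_eqI[OF c'] by simp
  qed
  have Hconst: "Hh z = Hh 1" if "z \<noteq> 0" for z
    by (rule qper_const[OF p(2) p(1) analytic_imp_holomorphic[OF Hhan] Hhper that])
  have Rv: "R v \<noteq> 0" using g2 by (simp add: R_def)
  have "Hh v = H0 v" unfolding Hh_def by (rule remove_sings_eqI[OF lim_reg[OF nz(3) Rv]])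
  also have "\<dots> = 0" by (simp add: H0_def Fv)
  finally have Hh0: "Hh z = 0" if "z \<noteq> 0" for z using Hconst[OF that] Hconst[OF nz(3)] by simp
  show ?thesis
  proof (cases "R x = 0")
    case False
    have "Hh x = H0 x" unfolding Hh_def by (rule remove_sings_eqI[OF lim_reg[OF x False]])
    hence "F x / R x = 0" using Hh0[OF x] by (simp add: H0_def)
    thus ?thesis using False by (simp add: F_def)
  next
    case True
    note o1 = zero_orbit[where G=F and p=p and w=u, OF p(2) Fper nz(2) Fu]
    have iu: "1/u \<noteq> 0" using nz by simp
    note o2 = zero_orbit[where G=F and p=p and w="1/u", OF p(2) Fper iu Fiu]
    from zero_cases[OF p(1) nz(2) True[unfolded R_def]] have "F x = 0"
      using o1 o2 by blast
    thus ?thesis by (simp add: F_def)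
  qed
qed

lemma theta_p0: "theta w 0 = 1 - w"
proof -
  have A0: "Ap 0 0 = 1" unfolding Ap_def by simp
  have "theta w 0 = Ap 0 w * Ap 0 (0 / w)" by (rule theta_Ap) simp
  also have "Ap 0 w = (1 - w) * Ap 0 (0 * w)" by (rule Ap_shift) simp
  finally show ?thesis using A0 by simp
qed

lemma Fadd_p0:
  assumes nz: "x \<noteq> 0" "y \<noteq> 0" "u \<noteq> 0" "v \<noteq> 0"
  shows "Fadd x y u v 0 = 0"
  unfolding Fadd_def theta_p0 using nz by (simp add: field_simps)


lemma csqrt_sq_cases: "csqrt (u * u) = u \<or> csqrt (u * u) = - u"
proof -
  have "(csqrt (u * u))^2 = u^2" using power2_csqrt[of "u*u"] by (simp add: power2_eq_square)
  thus ?thesis using power2_eq_iff by blast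
qed

lemma Fadd_zero:
  assumes p: "norm p < 1" and nz: "x \<noteq> 0" "y \<noteq> 0" "u \<noteq> 0" "v \<noteq> 0"
  shows "Fadd x y u v p = 0"
proof (cases "p = 0")
  case True thus ?thesis using Fadd_p0[OF nz] by simp
next
  case p0: False
  define Z where "Z = range (\<lambda>j. inverse (p ^ j)) \<union> range (\<lambda>j. p ^ Suc j)"
  have cZ: "countable Z" unfolding Z_def by simp
  define C where "C = {0} \<union> {w. theta (w * w) p = 0} \<union> {w. theta (v * w) p = 0} \<union> {w. theta (v / w) p = 0}"
  have "C \<subseteq> {0} \<union> (csqrt ` Z) \<union> ((\<lambda>w. - csqrt w) ` Z) \<union> ((\<lambda>w. w / v) ` Z) \<union> ((\<lambda>w. v / w) ` Z)"
  proof
    fix w assume w: "w \<in> C"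
    show "w \<in> {0} \<union> (csqrt ` Z) \<union> ((\<lambda>w. - csqrt w) ` Z) \<union> ((\<lambda>w. w / v) ` Z) \<union> ((\<lambda>w. v / w) ` Z)"
    proof (cases "w = 0")
      case True thus ?thesis by simp
    next
      case w0: False
      from w w0 consider "theta (w * w) p = 0" | "theta (v * w) p = 0" | "theta (v / w) p = 0"
        unfolding C_def by blast
      thus ?thesis
      proof cases
        case 1
        hence Zw: "w * w \<in> Z" using theta_zero_set[OF p 1] unfolding Z_def by blast
        from csqrt_sq_cases[of w] show ?thesis
        proof
          assume "csqrt (w * w) = w"
          hence "w = csqrt (w * w)" by simp
          thus ?thesis using Zw by blast
        next
          assume "csqrt (w * w) = - w"
          hence "w = - csqrt (w * w)" by simp
          thus ?thesis using Zw by blast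
        qed
      next
        case 2
        hence Zw: "v * w \<in> Z" using theta_zero_set[OF p 2] unfolding Z_def by blast
        have "w = (v * w) / v" using nz by simp
        thus ?thesis using Zw by blast
      next
        case 3
        hence Zw: "v / w \<in> Z" using theta_zero_set[OF p 3] unfolding Z_def by blast
        have "w = v / (v / w)" using nz w0 by simp
        thus ?thesis using Zw by blast
      qed
    qed
  qed
  moreover have "countable ({0} \<union> (csqrt ` Z) \<union> ((\<lambda>w. - csqrt w) ` Z) \<union> ((\<lambda>w. w / v) ` Z) \<union> ((\<lambda>w. v / w) ` Z))"
    using cZ by simp
  ultimately have cC: "countable C" by (rule countable_subset)
  obtain X where X: "\<And>n. X n \<notin> C" and lim: "X \<longlonglongrightarrow> u" using countable_avoid_seq[OF cC] by blast
  have Xz: "Fadd x y (X n) v p = 0" for n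
  proof (rule Fadd_generic[OF p p0 nz(2) _ nz(4) _ _ nz(1)])
    show "X n \<noteq> 0" using X[of n] by (auto simp: C_def)
    show "theta (X n * X n) p \<noteq> 0" using X[of n] by (auto simp: C_def)
    show "theta (v * X n) p * theta (v / X n) p \<noteq> 0" using X[of n] by (auto simp: C_def)
  qed
  have "isCont (\<lambda>w. Fadd x y w v p) u" unfolding Fadd_def using nz
    by (intro continuous_intros p) auto
  hence "(\<lambda>n. Fadd x y (X n) v p) \<longlonglongrightarrow> Fadd x y u v p" using lim by (rule isCont_tendsto_compose)
  hence "(\<lambda>n. 0) \<longlonglongrightarrow> Fadd x y u v p" using Xz by simp
  thus ?thesis using LIMSEQ_unique tendsto_const by metis
qed

definition Tp :: "complex \<Rightarrow> complex \<Rightarrow> complex \<Rightarrow> complex" where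
  "Tp p w z = theta (w * z) p * theta (w / z) p"

lemma Tp_swap:
  assumes p: "norm p < 1" and nz: "x \<noteq> 0" "y \<noteq> 0"
  shows "Tp p y x = - (y / x) * Tp p x y"
proof -
  have "theta (y / x) p = - theta (x / y) p / (x / y)"
    using theta_inv[OF p, of "x/y"] nz by simp
  also have "\<dots> = - (y / x) * theta (x / y) p" using nz by (simp add: field_simps)
  finally have h1: "theta (y / x) p = - (y / x) * theta (x / y) p" .
  have h2: "theta (y * x) p = theta (x * y) p" by (simp add: mult.commute)
  show ?thesis unfolding Tp_def h1 h2 by (simp add: algebra_simps)
qed

lemma Tp_add:
  assumes p: "norm p < 1" and nz: "x \<noteq> 0" "y \<noteq> 0" "u \<noteq> 0" "v \<noteq> 0"
  shows "Tp p x y * Tp p u v - Tp p x v * Tp p u y = (u / y) * Tp p y v * Tp p x u"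
  using Fadd_zero[OF p nz] unfolding Fadd_def Tp_def by (simp add: algebra_simps)

lemma Tp_two:
  assumes p: "norm p < 1" and nz: "b \<noteq> 0" "z \<noteq> 0" "c \<noteq> 0" "a \<noteq> 0"
    and T1: "Tp p c a \<noteq> 0" "Tp p a c \<noteq> 0" and T2: "Tp p a z \<noteq> 0" "Tp p c z \<noteq> 0"
  shows "Tp p b z / (Tp p a z * Tp p c z)
     = Tp p b a / Tp p c a / Tp p a z + Tp p b c / Tp p a c / Tp p c z"
proof -
  have e1: "Tp p b z * Tp p c a - Tp p b a * Tp p c z = (c / z) * Tp p z a * Tp p b c"
    by (rule Tp_add[OF p nz])
  have e2: "Tp p z a = - (z / a) * Tp p a z" by (rule Tp_swap[OF p nz(4) nz(2)])
  have e3: "Tp p a c = - (a / c) * Tp p c a" by (rule Tp_swap[OF p nz(3) nz(4)])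
  have key: "Tp p b z * Tp p c a = Tp p b a * Tp p c z - (c / a) * Tp p a z * Tp p b c"
    using e1 unfolding e2 using nz by (simp add: field_simps)
  have key2: "a * (Tp p b z * Tp p c a) + c * (Tp p a z * Tp p b c) = a * (Tp p b a * Tp p c z)"
    using key nz by (simp add: field_simps)
  show ?thesis using T1 T2 nz key2 unfolding e3 by (simp add: field_simps)
qed


definition coef :: "complex \<Rightarrow> (nat \<Rightarrow> complex) \<Rightarrow> (nat \<Rightarrow> complex) \<Rightarrow> nat \<Rightarrow> nat \<Rightarrow> complex" where
  "coef p a b n k = (\<Prod>i<n. Tp p (b i) (a k)) / (\<Prod>j\<in>{..n}-{k}. Tp p (a j) (a k))"

lemma PF:
  assumes p: "norm p < 1"
    and a: "\<And>j. j \<le> n \<Longrightarrow> a j \<noteq> 0" and b: "\<And>i. i < n \<Longrightarrow> b i \<noteq> 0"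
    and Ta: "\<And>j k. j \<le> n \<Longrightarrow> k \<le> n \<Longrightarrow> j \<noteq> k \<Longrightarrow> Tp p (a j) (a k) \<noteq> 0"
    and z: "z \<noteq> 0" and Tz: "\<And>j. j \<le> n \<Longrightarrow> Tp p (a j) z \<noteq> 0"
  shows "(\<Prod>i<n. Tp p (b i) z) / (\<Prod>j\<le>n. Tp p (a j) z) = (\<Sum>k\<le>n. coef p a b n k / Tp p (a k) z)"
  using a b Ta z Tz
proof (induction n arbitrary: z)
  case 0
  thus ?case by (simp add: coef_def)
next
  case (Suc n)
  define a' where "a' = a (Suc n)"
  have a'0: "a' \<noteq> 0" using Suc.prems(1) by (simp add: a'_def)
  have bn: "b n \<noteq> 0" using Suc.prems(2) by simp
  have Taa': "Tp p (a k) a' \<noteq> 0" "Tp p a' (a k) \<noteq> 0" if "k \<le> n" for k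
    using Suc.prems(3)[of k "Suc n"] Suc.prems(3)[of "Suc n" k] that by (auto simp: a'_def)
  have Tz': "Tp p a' z \<noteq> 0" using Suc.prems(5)[of "Suc n"] by (simp add: a'_def)
  have IHz: "(\<Prod>i<n. Tp p (b i) z) / (\<Prod>j\<le>n. Tp p (a j) z) = (\<Sum>k\<le>n. coef p a b n k / Tp p (a k) z)"
    using Suc.prems by (intro Suc.IH) auto
  have IHa: "(\<Prod>i<n. Tp p (b i) a') / (\<Prod>j\<le>n. Tp p (a j) a') = (\<Sum>k\<le>n. coef p a b n k / Tp p (a k) a')"
    using Suc.prems a'0 Taa' by (intro Suc.IH) auto
  have coef_step: "coef p a b (Suc n) k = coef p a b n k * Tp p (b n) (a k) / Tp p a' (a k)" if k: "k \<le> n" for k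
  proof -
    have "{..Suc n} - {k} = insert (Suc n) ({..n} - {k})" using k by auto
    hence "(\<Prod>j\<in>{..Suc n}-{k}. Tp p (a j) (a k)) = Tp p a' (a k) * (\<Prod>j\<in>{..n}-{k}. Tp p (a j) (a k))"
      by (simp add: a'_def)
    thus ?thesis unfolding coef_def by (simp add: field_simps)
  qed
  have coef_last: "coef p a b (Suc n) (Suc n) = (\<Prod>i<n. Tp p (b i) a') / (\<Prod>j\<le>n. Tp p (a j) a') * Tp p (b n) a'"
  proof -
    have "{..Suc n} - {Suc n} = {..n}" by auto
    thus ?thesis unfolding coef_def by (simp add: a'_def field_simps)
  qed
  have two: "Tp p (b n) z / (Tp p (a k) z * Tp p a' z)
     = Tp p (b n) (a k) / Tp p a' (a k) / Tp p (a k) z + Tp p (b n) a' / Tp p (a k) a' / Tp p a' z"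
    if k: "k \<le> n" for k
    by (rule Tp_two[OF p bn Suc.prems(4) a'0 Suc.prems(1)[of k] Taa'(2)[OF k] Taa'(1)[OF k]
          Suc.prems(5)[of k] Tz']) (use k in auto)
  have "(\<Prod>i<Suc n. Tp p (b i) z) / (\<Prod>j\<le>Suc n. Tp p (a j) z)
      = ((\<Prod>i<n. Tp p (b i) z) / (\<Prod>j\<le>n. Tp p (a j) z)) * (Tp p (b n) z / Tp p a' z)"
    by (simp add: a'_def)
  also have "\<dots> = (\<Sum>k\<le>n. coef p a b n k * (Tp p (b n) z / (Tp p (a k) z * Tp p a' z)))"
    unfolding IHz sum_distrib_right by (intro sum.cong refl) (simp add: field_simps)
  also have "\<dots> = (\<Sum>k\<le>n. coef p a b (Suc n) k / Tp p (a k) z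
                   + coef p a b n k / Tp p (a k) a' * (Tp p (b n) a' / Tp p a' z))"
    by (intro sum.cong refl) (simp add: two coef_step distrib_left)
  also have "\<dots> = (\<Sum>k\<le>n. coef p a b (Suc n) k / Tp p (a k) z)
                   + (\<Sum>k\<le>n. coef p a b n k / Tp p (a k) a') * (Tp p (b n) a' / Tp p a' z)"
    by (simp only: sum.distrib sum_distrib_right)
  also have "\<dots> = (\<Sum>k\<le>n. coef p a b (Suc n) k / Tp p (a k) z) + coef p a b (Suc n) (Suc n) / Tp p a' z"
    unfolding IHa[symmetric] coef_last by simp
  also have "\<dots> = (\<Sum>k\<le>Suc n. coef p a b (Suc n) k / Tp p (a k) z)"
    by (simp add: a'_def)
  finally show ?case .
qed

lemma tf_0 [simp]: "tfac x q p 0 = 1" by (simp add: tfac_def)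

lemma tf_Suc: "tfac x q p (Suc k) = tfac x q p k * theta (x * q ^ k) p"
  by (simp add: tfac_def)

lemma tf_add: "tfac x q p (m + k) = tfac x q p m * tfac (x * q ^ m) q p k"
proof (induction k)
  case 0 thus ?case by simp
next
  case (Suc k)
  have "tfac x q p (m + Suc k) = tfac x q p (m + k) * theta (x * q ^ (m + k)) p"
    by (simp add: tf_Suc)
  also have "x * q ^ (m + k) = x * q ^ m * q ^ k" by (simp add: power_add mult.assoc)
  finally show ?case using Suc by (simp add: tf_Suc mult.assoc)
qed

lemma tf_one: "tfac x q p 1 = theta x p" by (simp add: tfac_def)

lemma tf_shift1: "tfac x q p k * theta (x * q ^ k) p = theta x p * tfac (x * q) q p k"
proof -
  have "tfac x q p (k + 1) = tfac x q p (1 + k)" by simp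
  thus ?thesis unfolding tf_add tf_one by simp
qed

lemma tf_nz: "tfac x q p k \<noteq> 0 \<longleftrightarrow> (\<forall>i<k. theta (x * q ^ i) p \<noteq> 0)"
  by (simp add: tfac_def) blast

lemma theta_inv_mult:
  assumes "norm p < 1" "w \<noteq> 0"
  shows "theta (1 / w) p * (- w) = theta w p"
  using theta_inv[OF assms] assms(2) by simp

lemma REV:
  assumes p: "norm p < 1" and c: "c \<noteq> 0" and q: "q \<noteq> 0"
  shows "(\<Prod>i<s. theta (c * q ^ i / q ^ k) p) * tfac (q / (q ^ s * c)) q p k * q ^ (s * k)
         = tfac c q p s * tfac (q / c) q p k"
proof (induction k)
  case 0 thus ?case by (simp add: tfac_def)
next
  case (Suc k)
  define f where "f = (\<lambda>i. theta (c * q ^ i / q ^ Suc k) p)"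
  have X1: "(\<Prod>i<s. theta (c * q ^ i / q ^ k) p) = (\<Prod>i<s. f (Suc i))"
    unfolding f_def using q by (intro prod.cong refl) (simp add: field_simps)
  have shift: "(\<Prod>i<s. f i) * f s = (\<Prod>i<s. f (Suc i)) * f 0"
    by (induction s) (simp_all add: mult_ac)
  have e1: "theta (q / (q ^ s * c) * q ^ k) p = - (q ^ Suc k / (q ^ s * c)) * f s"
  proof -
    have "q / (q ^ s * c) * q ^ k = 1 / (c * q ^ s / q ^ Suc k)" using q c by (simp add: field_simps)
    hence "theta (q / (q ^ s * c) * q ^ k) p = theta (1 / (c * q ^ s / q ^ Suc k)) p" by (rule arg_cong[where f="\<lambda>w. theta w p"])
    also have "\<dots> = - theta (c * q ^ s / q ^ Suc k) p / (c * q ^ s / q ^ Suc k)"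
      using theta_inv[OF p, of "c * q ^ s / q ^ Suc k"] q c by simp
    finally show ?thesis unfolding f_def using q c by (simp add: field_simps)
  qed
  have e2: "theta (q / c * q ^ k) p = - (q ^ Suc k / c) * f 0"
  proof -
    have "q / c * q ^ k = 1 / (c / q ^ Suc k)" using q c by (simp add: field_simps)
    hence "theta (q / c * q ^ k) p = theta (1 / (c / q ^ Suc k)) p" by (rule arg_cong[where f="\<lambda>w. theta w p"])
    also have "\<dots> = - theta (c / q ^ Suc k) p / (c / q ^ Suc k)"
      using theta_inv[OF p, of "c / q ^ Suc k"] q c by simp
    finally show ?thesis unfolding f_def using q c by (simp add: field_simps)
  qed
  have "(\<Prod>i<s. f i) * tfac (q / (q ^ s * c)) q p (Suc k) * q ^ (s * Suc k)
      = ((\<Prod>i<s. f i) * f s) * tfac (q / (q ^ s * c)) q p k * (- (q ^ Suc k / (q ^ s * c))) * q ^ (s * Suc k)"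
    unfolding tf_Suc e1 by (simp add: mult_ac)
  also have "\<dots> = ((\<Prod>i<s. f (Suc i)) * tfac (q / (q ^ s * c)) q p k * q ^ (s * k)) * (- (q ^ Suc k / c) * f 0)"
    unfolding shift using q c by (simp add: field_simps power_add power_mult_distrib mult.commute[of s])
  also have "\<dots> = tfac c q p s * tfac (q / c) q p (Suc k)"
    unfolding X1[symmetric] Suc tf_Suc e2 by (simp add: mult_ac)
  finally show ?case unfolding f_def .
qed


lemma Q1:
  assumes p: "norm p < 1" and q: "q \<noteq> 0"
  shows "(\<Prod>j<k. theta (q ^ j / q ^ k) p) * (\<Prod>m<k. - (q ^ (m + 1))) = tfac q q p k"
proof (induction k)
  case 0 thus ?case by simp
next
  case (Suc k)
  have a: "(\<Prod>j<Suc k. theta (q ^ j / q ^ Suc k) p) = theta (1 / q ^ Suc k) p * (\<Prod>j<k. theta (q ^ j / q ^ k) p)"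
  proof -
    have "(\<Prod>j<Suc k. theta (q ^ j / q ^ Suc k) p) = theta (q ^ 0 / q ^ Suc k) p * (\<Prod>j<k. theta (q ^ Suc j / q ^ Suc k) p)"
      by (rule prod.lessThan_Suc_shift)
    also have "(\<Prod>j<k. theta (q ^ Suc j / q ^ Suc k) p) = (\<Prod>j<k. theta (q ^ j / q ^ k) p)"
      using q by (intro prod.cong refl) simp
    finally show ?thesis by (simp only: power_0)
  qed
  have b: "theta (1 / q ^ Suc k) p * (- (q ^ Suc k)) = theta (q * q ^ k) p"
    using theta_inv_mult[OF p, of "q ^ Suc k"] q by simp
  have "(\<Prod>j<Suc k. theta (q ^ j / q ^ Suc k) p) * (\<Prod>m<Suc k. - (q ^ (m + 1)))
     = ((\<Prod>j<k. theta (q ^ j / q ^ k) p) * (\<Prod>m<k. - (q ^ (m + 1)))) * (theta (1 / q ^ Suc k) p * (- (q ^ Suc k)))"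
    unfolding a unfolding prod.lessThan_Suc by (simp only: mult_ac Suc_eq_plus1)
  also have "\<dots> = tfac q q p (Suc k)" unfolding Suc b tf_Suc by simp
  finally show ?case .
qed

lemma Q2a:
  assumes p: "norm p < 1" and q: "q \<noteq> 0" and k: "k \<le> n"
  shows "tfac (inverse (q ^ n)) q p k * (\<Prod>m<k. - (q ^ (n - m))) = (\<Prod>m<k. theta (q ^ (n - m)) p)"
  unfolding tfac_def prod.distrib[symmetric]
proof (rule prod.cong[OF refl])
  fix m assume m: "m \<in> {..<k}"
  hence mn: "m \<le> n" using k by simp
  have "q ^ n = q ^ m * q ^ (n - m)" using mn by (simp add: power_add[symmetric])
  hence "inverse (q ^ n) * q ^ m = 1 / q ^ (n - m)" using q by (simp add: field_simps)
  thus "theta (inverse (q ^ n) * q ^ m) p * - (q ^ (n - m)) = theta (q ^ (n - m)) p"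
    using theta_inv_mult[OF p, of "q ^ (n - m)"] q by simp
qed

lemma Q2b:
  assumes k: "k \<le> n"
  shows "(\<Prod>m<k. theta (q ^ (n - m)) p) * tfac q q p (n - k) = tfac q q p n"
  using k
proof (induction k)
  case 0 thus ?case by simp
next
  case (Suc k)
  have nk: "n - k = Suc (n - Suc k)" using Suc.prems by simp
  have qq: "q * q ^ (n - Suc k) = q ^ (n - k)" using nk by simp
  have "(\<Prod>m<Suc k. theta (q ^ (n - m)) p) * tfac q q p (n - Suc k)
      = (\<Prod>m<k. theta (q ^ (n - m)) p) * (tfac q q p (n - Suc k) * theta (q * q ^ (n - Suc k)) p)"
    unfolding prod.lessThan_Suc qq by (simp add: mult_ac)
  also have "\<dots> = (\<Prod>m<k. theta (q ^ (n - m)) p) * tfac q q p (n - k)"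
    unfolding nk tf_Suc by simp
  also have "\<dots> = tfac q q p n" using Suc by simp
  finally show ?case .
qed

lemma PYZ:
  assumes k: "k \<le> n"
  shows "(\<Prod>m<k. - (q ^ (m + 1))) * (\<Prod>m<k. - (q ^ (n - m))) = (q :: complex) ^ ((n + 1) * k)"
proof -
  have "(\<Prod>m<k. - (q ^ (m + 1))) * (\<Prod>m<k. - (q ^ (n - m))) = (\<Prod>m<k. q ^ (n + 1))"
    unfolding prod.distrib[symmetric]
  proof (rule prod.cong[OF refl])
    fix m assume "m \<in> {..<k}"
    hence "m + 1 + (n - m) = n + 1" using k by simp
    thus "- (q ^ (m + 1)) * - (q ^ (n - m)) = q ^ (n + 1)" by (simp add: power_add[symmetric])
  qed
  also have "\<dots> = (q ^ (n + 1)) ^ k" by simp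
  also have "\<dots> = q ^ ((n + 1) * k)" by (rule power_mult[symmetric])
  finally show ?thesis .
qed

lemma Esplit:
  assumes k: "k \<le> n"
  shows "theta x p * tfac (x * q) q p n * tfac (x * q ^ (n + 1)) q p k
       = tfac x q p k * tfac (x * q ^ k) q p k * theta (x * q ^ (2 * k)) p * tfac (x * q ^ (2 * k + 1)) q p (n - k)"
proof -
  have "tfac x q p (1 + (n + k)) = theta x p * (tfac (x * q) q p n * tfac (x * q * q ^ n) q p k)"
    unfolding tf_add tf_one by simp
  also have "x * q * q ^ n = x * q ^ (n + 1)" by (simp add: mult_ac)
  finally have L: "tfac x q p (1 + (n + k)) = theta x p * tfac (x * q) q p n * tfac (x * q ^ (n + 1)) q p k"
    by (simp add: mult_ac)
  have "tfac x q p (k + (k + (1 + (n - k))))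
      = tfac x q p k * (tfac (x * q ^ k) q p k * (theta (x * q ^ k * q ^ k) p * tfac (x * q ^ k * q ^ k * q) q p (n - k)))"
    unfolding tf_add tf_one by simp
  also have "x * q ^ k * q ^ k = x * q ^ (2 * k)" by (simp add: mult_2 power_add mult.assoc)
  also have "x * q ^ (2 * k) * q = x * q ^ (2 * k + 1)" by (simp add: mult_ac)
  finally have R: "tfac x q p (k + (k + (1 + (n - k))))
      = tfac x q p k * tfac (x * q ^ k) q p k * theta (x * q ^ (2 * k)) p * tfac (x * q ^ (2 * k + 1)) q p (n - k)"
    by (simp add: mult_ac)
  have eq: "1 + (n + k) = k + (k + (1 + (n - k)))" using k by simp
  show ?thesis using L R eq by metis
qed

lemma Bsplit: "tfac x q p s * tfac (x * q ^ s) q p k = tfac x q p k * tfac (x * q ^ k) q p s"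
  by (metis tf_add add.commute)

lemma ALG:
  fixes TQn TQk TQnk TA1n TA0k TAn1k TAkk TA2k1 th0 th2k Tinv Y V PY PZ
    TabS TabK TabqkS TabqsK TbaS Tb1 Tb2 Xb TadN TadK TadqkN TadqK TdaN Td1 Td2 Xd
    TazK TaqzK Ta_zK Taq_zK thaz tha_z thakz thak_z qk qsk qnsk qn1k :: complex
  assumes E: "th0*TA1n*TAn1k = TA0k*TAkk*th2k*TA2k1"
  and B1b: "TabS*TabqsK = TabK*TabqkS" and B1d: "TadN*TadqK = TadK*TadqkN"
  and B2b: "Xb*Tb1*qsk = TbaS*Tb2" and B2d: "Xd*Td1*qnsk = TdaN*Td2"
  and Q1: "Y*PY = TQk" and Q2a: "Tinv*PZ = V" and Q2b: "V*TQnk = TQn"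
  and PYZ: "PY*PZ = qn1k" and QQ: "qk * qsk * qnsk = qn1k"
  and Z1: "TazK*thakz = thaz*TaqzK" and Z2: "Ta_zK*thak_z = tha_z*Taq_zK"
  and nz: "th0 \<noteq> 0" "TQk \<noteq> 0" "TAn1k \<noteq> 0" "Taq_zK \<noteq> 0" "TaqzK \<noteq> 0" "TabK \<noteq> 0" "TadK \<noteq> 0"
     "Tb1 \<noteq> 0" "Td1 \<noteq> 0" "TabS \<noteq> 0" "TbaS \<noteq> 0" "TadN \<noteq> 0" "TdaN \<noteq> 0"
     "thakz \<noteq> 0" "thak_z \<noteq> 0" "TAkk \<noteq> 0" "Y \<noteq> 0" "TA2k1 \<noteq> 0" "TQnk \<noteq> 0"
     "PY \<noteq> 0" "PZ \<noteq> 0" "qsk \<noteq> 0" "qnsk \<noteq> 0" "th2k \<noteq> 0"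
  shows "qk * th2k / th0 * (TA0k*Tinv*TazK*Ta_zK*Tb2*Td2*TabqsK*TadqK) / (TQk*TAn1k*Taq_zK*TaqzK*TabK*TadK*Tb1*Td1)
   = (TQn*TA1n / (TabS*TbaS*TadN*TdaN)) * (thaz*tha_z) * (((TabqkS*Xb)*(TadqkN*Xd)) / ((TAkk*Y)*(TA2k1*TQnk)) / (thakz*thak_z))"
proof -
  have s1: "TA0k = th0*TA1n*TAn1k/(TAkk*th2k*TA2k1)" using E nz by (simp add: field_simps)
  have s2: "Tinv = TQn/(TQnk*PZ)"
  proof -
    have "TQn = TQnk * (Tinv * PZ)" using Q2a Q2b by (simp add: mult_ac)
    thus ?thesis using nz by (simp add: field_simps)
  qed
  have s3: "TQk = Y*PY" using Q1 by simp
  have s4: "TazK = thaz*TaqzK/thakz" using Z1 nz by (simp add: field_simps)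
  have s5: "Ta_zK = tha_z*Taq_zK/thak_z" using Z2 nz by (simp add: field_simps)
  have s6: "TabqsK = TabK*TabqkS/TabS" using B1b nz by (simp add: field_simps)
  have s7: "TadqK = TadK*TadqkN/TadN" using B1d nz by (simp add: field_simps)
  have s8: "Tb2 = Xb*Tb1*qsk/TbaS" using B2b nz by (simp add: field_simps)
  have s9: "Td2 = Xd*Td1*qnsk/TdaN" using B2d nz by (simp add: field_simps)
  have s10: "qk = PY*PZ/(qsk*qnsk)" using QQ PYZ nz by (simp add: field_simps)
  show ?thesis unfolding s1 s2 s3 s4 s5 s6 s7 s8 s9 s10 using nz by (simp add: field_simps)
qed


lemma PS1: "(\<Prod>i<s+m. f i) = (\<Prod>i<s. f i) * (\<Prod>i<m. f (s + i)) " for f :: "nat \<Rightarrow> complex"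
  by (induction m) (simp_all add: mult_ac)

lemma PS2:
  fixes f :: "nat \<Rightarrow> complex"
  assumes "k \<le> n"
  shows "(\<Prod>j\<in>{..n}-{k}. f j) = (\<Prod>j<k. f j) * (\<Prod>j<n-k. f (Suc k + j))"
  using assms
proof (induction n rule: dec_induct)
  case base
  have "{..k} - {k} = {..<k}" by auto
  thus ?case by simp
next
  case (step m)
  have "{..Suc m} - {k} = insert (Suc m) ({..m} - {k})" using step.hyps by auto
  hence "(\<Prod>j\<in>{..Suc m}-{k}. f j) = f (Suc m) * (\<Prod>j\<in>{..m}-{k}. f j)" by simp
  moreover have "Suc m - k = Suc (m - k)" using step.hyps by simp
  moreover have "Suc k + (m - k) = Suc m" using step.hyps by simp
  ultimately show ?case using step.IH by (simp add: mult_ac)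
qed

lemma TPprod: "(\<Prod>i<m. Tp p (c * q ^ i) w) = tfac (c * w) q p m * tfac (c / w) q p m"
  unfolding Tp_def tfac_def prod.distrib[symmetric]
  by (intro prod.cong refl) (simp add: mult_ac)

lemma TPprod2:
  assumes "a \<noteq> 0" "q \<noteq> 0"
  shows "(\<Prod>i<m. Tp p (c * q ^ i) (a * q ^ k)) = tfac (a * c * q ^ k) q p m * (\<Prod>i<m. theta (c / a * q ^ i / q ^ k) p)"
  unfolding Tp_def tfac_def prod.distrib[symmetric]
  using assms by (intro prod.cong refl) (simp add: mult_ac)

lemma Tlow:
  assumes "a \<noteq> 0" "q \<noteq> 0"
  shows "(\<Prod>j<k. Tp p (a * q ^ j) (a * q ^ k)) = tfac (a ^ 2 * q ^ k) q p k * (\<Prod>j<k. theta (q ^ j / q ^ k) p)"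
  unfolding Tp_def tfac_def prod.distrib[symmetric]
  using assms by (intro prod.cong refl) (simp add: mult_ac power2_eq_square)

lemma Thigh:
  assumes "a \<noteq> 0" "q \<noteq> 0"
  shows "(\<Prod>j<m. Tp p (a * q ^ (Suc k + j)) (a * q ^ k)) = tfac (a ^ 2 * q ^ (2 * k + 1)) q p m * tfac q q p m"
  unfolding Tp_def tfac_def prod.distrib[symmetric]
proof (intro prod.cong refl)
  fix j
  have 1: "a * q ^ (Suc k + j) * (a * q ^ k) = a ^ 2 * q ^ (2 * k + 1) * q ^ j"
    unfolding mult_2 by (simp add: power_add power2_eq_square mult_ac)
  have 2: "a * q ^ (Suc k + j) / (a * q ^ k) = q * q ^ j"
    using assms by (simp add: power_add field_simps)
  show "theta (a * q ^ (Suc k + j) * (a * q ^ k)) p * theta (a * q ^ (Suc k + j) / (a * q ^ k)) p =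
        theta (a\<^sup>2 * q ^ (2 * k + 1) * q ^ j) p * theta (q * q ^ j) p" unfolding 1 2 ..
qed


lemma KEY:
  fixes q p a b d z :: complex and n s k :: nat
  assumes p: "norm p < 1" and q: "q \<noteq> 0" and sn: "s \<le> n" and k: "k \<le> n"
    and nz: "a \<noteq> 0" "b \<noteq> 0" "d \<noteq> 0" "z \<noteq> 0"
    and hL2: "tfac (a * b) q p s * tfac (b / a) q p s \<noteq> 0"
    and hL3: "tfac (a * d) q p (n - s) * tfac (d / a) q p (n - s) \<noteq> 0"
    and hR1: "theta (a ^ 2) p \<noteq> 0"
    and hR2: "tfac q q p k * tfac (a ^ 2 * q ^ (n + 1)) q p k
               * tfac (a * q / z) q p k * tfac (a * q * z) q p k
               * tfac (a * b) q p k * tfac (a * d) q p k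
               * tfac (a * q / (q ^ s * b)) q p k
               * tfac (a * q * q ^ s / (q ^ n * d)) q p k \<noteq> 0"
    and TQn: "tfac q q p n \<noteq> 0"
    and ga: "\<And>m. m \<le> 2 * n \<Longrightarrow> theta (a ^ 2 * q ^ m) p \<noteq> 0"
    and Tz: "Tp p (a * q ^ k) z \<noteq> 0"
  shows "q ^ k * theta (a ^ 2 * q ^ (2 * k)) p / theta (a ^ 2) p
           * (tfac (a ^ 2) q p k * tfac (inverse (q ^ n)) q p k
              * tfac (a * z) q p k * tfac (a / z) q p k
              * tfac (a * q / b) q p k * tfac (a * q / d) q p k
              * tfac (a * b * q ^ s) q p k * tfac (a * d * q ^ (n - s)) q p k)
           / (tfac q q p k * tfac (a ^ 2 * q ^ (n + 1)) q p k
              * tfac (a * q / z) q p k * tfac (a * q * z) q p k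
              * tfac (a * b) q p k * tfac (a * d) q p k
              * tfac (a * q / (q ^ s * b)) q p k
              * tfac (a * q * q ^ s / (q ^ n * d)) q p k)
       = (tfac q q p n * tfac (a ^ 2 * q) q p n / (tfac (a * b) q p s * tfac (b / a) q p s * tfac (a * d) q p (n - s) * tfac (d / a) q p (n - s)))
         * (theta (a * z) p * theta (a / z) p)
         * (coef p (\<lambda>j. a * q ^ j) (\<lambda>i. if i < s then b * q ^ i else d * q ^ (i - s)) n k
            / (theta (a * q ^ k * z) p * theta (a * q ^ k / z) p))"
proof -
  define Xb where "Xb = (\<Prod>i<s. theta (b / a * q ^ i / q ^ k) p)"
  define Xd where "Xd = (\<Prod>i<n - s. theta (d / a * q ^ i / q ^ k) p)"
  define Y where "Y = (\<Prod>j<k. theta (q ^ j / q ^ k) p)"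
  define PY where "PY = (\<Prod>m<k. - (q ^ (m + 1)))"
  define PZ where "PZ = (\<Prod>m<k. - (q ^ (n - m)))"
  define V where "V = (\<Prod>m<k. theta (q ^ (n - m)) p)"
  have num: "(\<Prod>i<n. Tp p (if i < s then b * q ^ i else d * q ^ (i - s)) (a * q ^ k))
      = tfac (a * b * q ^ k) q p s * Xb * (tfac (a * d * q ^ k) q p (n - s) * Xd)"
  proof -
    have "n = s + (n - s)" using sn by simp
    hence "(\<Prod>i<n. Tp p (if i < s then b * q ^ i else d * q ^ (i - s)) (a * q ^ k))
       = (\<Prod>i<s. Tp p (if i < s then b * q ^ i else d * q ^ (i - s)) (a * q ^ k))
         * (\<Prod>i<n - s. Tp p (if s + i < s then b * q ^ (s + i) else d * q ^ (s + i - s)) (a * q ^ k))"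
      using PS1[of "\<lambda>i. Tp p (if i < s then b * q ^ i else d * q ^ (i - s)) (a * q ^ k)" s "n - s"] by simp
    also have "(\<Prod>i<s. Tp p (if i < s then b * q ^ i else d * q ^ (i - s)) (a * q ^ k))
        = (\<Prod>i<s. Tp p (b * q ^ i) (a * q ^ k))" by (intro prod.cong refl) simp
    also have "(\<Prod>i<n - s. Tp p (if s + i < s then b * q ^ (s + i) else d * q ^ (s + i - s)) (a * q ^ k))
        = (\<Prod>i<n - s. Tp p (d * q ^ i) (a * q ^ k))" by (intro prod.cong refl) simp
    finally show ?thesis unfolding TPprod2[OF nz(1) q] Xb_def Xd_def by simp
  qed
  have den: "(\<Prod>j\<in>{..n}-{k}. Tp p (a * q ^ j) (a * q ^ k))
      = tfac (a ^ 2 * q ^ k) q p k * Y * (tfac (a ^ 2 * q ^ (2 * k + 1)) q p (n - k) * tfac q q p (n - k))"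
    unfolding PS2[OF k] Tlow[OF nz(1) q] Thigh[OF nz(1) q] Y_def ..
  have coef_eq: "coef p (\<lambda>j. a * q ^ j) (\<lambda>i. if i < s then b * q ^ i else d * q ^ (i - s)) n k
     = (tfac (a * b * q ^ k) q p s * Xb * (tfac (a * d * q ^ k) q p (n - s) * Xd))
       / ((tfac (a ^ 2 * q ^ k) q p k * Y) * (tfac (a ^ 2 * q ^ (2 * k + 1)) q p (n - k) * tfac q q p (n - k)))"
    unfolding coef_def num den ..
  note E = Esplit[OF k, of "a^2" p q]
  note B1b = Bsplit[of "a*b" q p s k]
  note B1d = Bsplit[of "a*d" q p "n-s" k]
  have B2b: "Xb * tfac (a * q / (q ^ s * b)) q p k * q ^ (s * k) = tfac (b / a) q p s * tfac (a * q / b) q p k"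
  proof -
    have ba: "b / a \<noteq> 0" using nz by simp
    have 1: "q / (q ^ s * (b / a)) = a * q / (q ^ s * b)" using nz by (simp add: field_simps)
    have 2: "q / (b / a) = a * q / b" using nz by (simp add: field_simps)
    show ?thesis using REV[OF p ba q, where s=s and k=k] unfolding Xb_def 1 2 .
  qed
  have B2d: "Xd * tfac (a * q * q ^ s / (q ^ n * d)) q p k * q ^ ((n - s) * k) = tfac (d / a) q p (n - s) * tfac (a * q / d) q p k"
  proof -
    have da: "d / a \<noteq> 0" using nz by simp
    have qn: "q ^ n = q ^ s * q ^ (n - s)" using sn by (simp add: power_add[symmetric])
    have 1: "q / (q ^ (n - s) * (d / a)) = a * q * q ^ s / (q ^ n * d)" using nz q unfolding qn by (simp add: field_simps)
    have 2: "q / (d / a) = a * q / d" using nz by (simp add: field_simps)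
    show ?thesis using REV[OF p da q, where s="n - s" and k=k] unfolding Xd_def 1 2 .
  qed
  have Q1': "Y * PY = tfac q q p k" unfolding Y_def PY_def by (rule Q1[OF p q])
  have Q2a': "tfac (inverse (q ^ n)) q p k * PZ = V" unfolding PZ_def V_def by (rule Q2a[OF p q k])
  have Q2b': "V * tfac q q p (n - k) = tfac q q p n" unfolding V_def by (rule Q2b[OF k])
  have PYZ': "PY * PZ = q ^ ((n + 1) * k)" unfolding PY_def PZ_def by (rule PYZ[OF k])
  have QQ: "q ^ k * q ^ (s * k) * q ^ ((n - s) * k) = q ^ ((n + 1) * k)"
  proof -
    have e: "k + s * k + (n - s) * k = (n + 1) * k" using sn by (simp add: algebra_simps)
    have "q ^ k * q ^ (s * k) * q ^ ((n - s) * k) = q ^ (k + s * k + (n - s) * k)" by (simp add: power_add)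
    thus ?thesis unfolding e .
  qed
  have Z1: "tfac (a * z) q p k * theta (a * q ^ k * z) p = theta (a * z) p * tfac (a * q * z) q p k"
    using tf_shift1[of "a*z" q p k] by (simp add: mult_ac)
  have Z2: "tfac (a / z) q p k * theta (a * q ^ k / z) p = theta (a / z) p * tfac (a * q / z) q p k"
    using tf_shift1[of "a/z" q p k] by (simp add: mult_ac)
  have hR2': "tfac q q p k \<noteq> 0" "tfac (a ^ 2 * q ^ (n + 1)) q p k \<noteq> 0"
     "tfac (a * q / z) q p k \<noteq> 0" "tfac (a * q * z) q p k \<noteq> 0"
     "tfac (a * b) q p k \<noteq> 0" "tfac (a * d) q p k \<noteq> 0"
     "tfac (a * q / (q ^ s * b)) q p k \<noteq> 0" "tfac (a * q * q ^ s / (q ^ n * d)) q p k \<noteq> 0"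
    using hR2 by auto
  have hL2': "tfac (a * b) q p s \<noteq> 0" "tfac (b / a) q p s \<noteq> 0" using hL2 by auto
  have hL3': "tfac (a * d) q p (n - s) \<noteq> 0" "tfac (d / a) q p (n - s) \<noteq> 0" using hL3 by auto
  have Tz': "theta (a * q ^ k * z) p \<noteq> 0" "theta (a * q ^ k / z) p \<noteq> 0" using Tz by (auto simp: Tp_def)
  have TAkk: "tfac (a ^ 2 * q ^ k) q p k \<noteq> 0"
    unfolding tf_nz
  proof (intro allI impI)
    fix i assume "i < k"
    hence "k + i \<le> 2 * n" using k by simp
    hence "theta (a ^ 2 * q ^ (k + i)) p \<noteq> 0" by (rule ga)
    thus "theta (a ^ 2 * q ^ k * q ^ i) p \<noteq> 0" by (simp add: power_add mult.assoc)
  qed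
  have TA2: "tfac (a ^ 2 * q ^ (2 * k + 1)) q p (n - k) \<noteq> 0"
    unfolding tf_nz
  proof (intro allI impI)
    fix i assume "i < n - k"
    hence "2 * k + 1 + i \<le> 2 * n" using k by simp
    hence "theta (a ^ 2 * q ^ (2 * k + 1 + i)) p \<noteq> 0" by (rule ga)
    thus "theta (a ^ 2 * q ^ (2 * k + 1) * q ^ i) p \<noteq> 0" by (simp add: power_add mult.assoc)
  qed
  have th2k: "theta (a ^ 2 * q ^ (2 * k)) p \<noteq> 0" using k by (intro ga) simp
  have Ynz: "Y \<noteq> 0" using Q1' hR2'(1) by auto
  have PYnz: "PY \<noteq> 0" and PZnz: "PZ \<noteq> 0" using PYZ' q by auto
  have TQnk: "tfac q q p (n - k) \<noteq> 0" using Q2b' TQn by auto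
  have qsk: "q ^ (s * k) \<noteq> 0" "q ^ ((n - s) * k) \<noteq> 0" using q by auto
  show ?thesis unfolding coef_eq
    by (rule ALG[OF E B1b B1d B2b B2d Q1' Q2a' Q2b' PYZ' QQ Z1 Z2 hR1 hR2'(1,2,3,4,5,6,7,8)
          hL2'(1,2) hL3'(1,2) Tz'(1,2) TAkk Ynz TA2 TQnk PYnz PZnz qsk(1,2) th2k])
qed


lemma MainG:
  fixes q p a b d z :: complex and n s :: nat
  assumes q: "q \<noteq> 0" and p: "norm p < 1" and sn: "s \<le> n"
    and nz: "a \<noteq> 0" "b \<noteq> 0" "d \<noteq> 0" "z \<noteq> 0"
    and hL1: "tfac (a * q * z) q p n * tfac (a * q / z) q p n \<noteq> 0"
    and hL2: "tfac (a * b) q p s * tfac (b / a) q p s \<noteq> 0"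
    and hL3: "tfac (a * d) q p (n - s) * tfac (d / a) q p (n - s) \<noteq> 0"
    and hR1: "theta (a ^ 2) p \<noteq> 0"
    and hR2: "\<forall>k\<le>n. tfac q q p k * tfac (a ^ 2 * q ^ (n + 1)) q p k
               * tfac (a * q / z) q p k * tfac (a * q * z) q p k
               * tfac (a * b) q p k * tfac (a * d) q p k
               * tfac (a * q / (q ^ s * b)) q p k
               * tfac (a * q * q ^ s / (q ^ n * d)) q p k \<noteq> 0"
    and gz: "theta (a * z) p * theta (a / z) p \<noteq> 0"
    and ga: "\<And>m. m \<le> 2 * n \<Longrightarrow> theta (a ^ 2 * q ^ m) p \<noteq> 0"
  shows "tfac q q p n * tfac (a ^ 2 * q) q p n
           / (tfac (a * q * z) q p n * tfac (a * q / z) q p n)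
         * (tfac (b * z) q p s * tfac (b / z) q p s
            * tfac (d * z) q p (n - s) * tfac (d / z) q p (n - s))
         / (tfac (a * b) q p s * tfac (b / a) q p s
            * tfac (a * d) q p (n - s) * tfac (d / a) q p (n - s))
       = (\<Sum>k=0..n. q ^ k * theta (a ^ 2 * q ^ (2 * k)) p / theta (a ^ 2) p
           * (tfac (a ^ 2) q p k * tfac (inverse (q ^ n)) q p k
              * tfac (a * z) q p k * tfac (a / z) q p k
              * tfac (a * q / b) q p k * tfac (a * q / d) q p k
              * tfac (a * b * q ^ s) q p k * tfac (a * d * q ^ (n - s)) q p k)
           / (tfac q q p k * tfac (a ^ 2 * q ^ (n + 1)) q p k
              * tfac (a * q / z) q p k * tfac (a * q * z) q p k
              * tfac (a * b) q p k * tfac (a * d) q p k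
              * tfac (a * q / (q ^ s * b)) q p k
              * tfac (a * q * q ^ s / (q ^ n * d)) q p k))"
proof -
  define aa where "aa = (\<lambda>j. a * q ^ j)"
  define bb where "bb = (\<lambda>i. if i < s then b * q ^ i else d * q ^ (i - s))"
  define Pf where "Pf = tfac q q p n * tfac (a ^ 2 * q) q p n / (tfac (a * b) q p s * tfac (b / a) q p s * tfac (a * d) q p (n - s) * tfac (d / a) q p (n - s))"
  have TQn: "tfac q q p n \<noteq> 0" using hR2 by auto
  have thq: "theta (q * q ^ i) p \<noteq> 0" if "i < n" for i using TQn[unfolded tf_nz] that by auto
  have Tz: "Tp p (aa j) z \<noteq> 0" if "j \<le> n" for j
  proof (cases j)
    case 0 thus ?thesis using gz by (simp add: aa_def Tp_def)
  next
    case (Suc i)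
    hence i: "i < n" using that by simp
    have "tfac (a * q * z) q p n \<noteq> 0" "tfac (a * q / z) q p n \<noteq> 0" using hL1 by auto
    hence h: "theta (a * q * z * q ^ i) p \<noteq> 0" "theta (a * q / z * q ^ i) p \<noteq> 0"
      using i unfolding tf_nz by auto
    have e: "a * q * z * q ^ i = a * q ^ j * z" "a * q / z * q ^ i = a * q ^ j / z"
      using Suc by (simp_all add: mult_ac)
    from h[unfolded e] show ?thesis by (simp add: aa_def Tp_def)
  qed
  have Ta: "Tp p (aa j) (aa k) \<noteq> 0" if jk: "j \<le> n" "k \<le> n" "j \<noteq> k" for j k
  proof -
    have "a * q ^ j * (a * q ^ k) = a ^ 2 * q ^ (j + k)" by (simp add: power_add power2_eq_square mult_ac)
    moreover have "theta (a ^ 2 * q ^ (j + k)) p \<noteq> 0" using jk by (intro ga) simp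
    ultimately have 1: "theta (a * q ^ j * (a * q ^ k)) p \<noteq> 0" by simp
    have 2: "theta (a * q ^ j / (a * q ^ k)) p \<noteq> 0"
    proof (cases "k < j")
      case True
      have ej: "j = k + Suc (j - k - 1)" using True by simp
      have "q ^ j = q ^ k * (q * q ^ (j - k - 1))" by (subst ej) (simp add: power_add)
      hence "a * q ^ j / (a * q ^ k) = q * q ^ (j - k - 1)"
        using nz q by simp
      thus ?thesis using thq[of "j - k - 1"] True jk by simp
    next
      case False
      hence kj: "j < k" using jk by simp
      have ek: "k = j + Suc (k - j - 1)" using kj by simp
      have "q ^ k = q ^ j * (q * q ^ (k - j - 1))" by (subst ek) (simp add: power_add)
      hence w: "a * q ^ j / (a * q ^ k) = 1 / (q * q ^ (k - j - 1))"
        using nz q by simp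
      have "theta (q * q ^ (k - j - 1)) p \<noteq> 0" using thq[of "k - j - 1"] kj jk by simp
      thus ?thesis unfolding w using theta_inv[OF p, of "q * q ^ (k - j - 1)"] q by simp
    qed
    show ?thesis using 1 2 by (simp add: aa_def Tp_def)
  qed
  have PFres: "(\<Prod>i<n. Tp p (bb i) z) / (\<Prod>j\<le>n. Tp p (aa j) z) = (\<Sum>k\<le>n. coef p aa bb n k / Tp p (aa k) z)"
    by (rule PF[OF p _ _ Ta nz(4) Tz]) (use nz q in \<open>auto simp: aa_def bb_def\<close>)
  have Nb: "(\<Prod>i<n. Tp p (bb i) z) = tfac (b * z) q p s * tfac (b / z) q p s * (tfac (d * z) q p (n - s) * tfac (d / z) q p (n - s))"
  proof -
    have "n = s + (n - s)" using sn by simp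
    hence "(\<Prod>i<n. Tp p (bb i) z) = (\<Prod>i<s. Tp p (bb i) z) * (\<Prod>i<n - s. Tp p (bb (s + i)) z)"
      using PS1[of "\<lambda>i. Tp p (bb i) z" s "n - s"] by simp
    also have "(\<Prod>i<s. Tp p (bb i) z) = (\<Prod>i<s. Tp p (b * q ^ i) z)" by (intro prod.cong refl) (simp add: bb_def)
    also have "(\<Prod>i<n - s. Tp p (bb (s + i)) z) = (\<Prod>i<n - s. Tp p (d * q ^ i) z)" by (intro prod.cong refl) (simp add: bb_def)
    finally show ?thesis unfolding TPprod by simp
  qed
  have Da: "(\<Prod>j\<le>n. Tp p (aa j) z) = Tp p a z * (tfac (a * q * z) q p n * tfac (a * q / z) q p n)"
  proof -
    have "(\<Prod>j\<le>n. Tp p (aa j) z) = Tp p (aa 0) z * (\<Prod>j<n. Tp p (aa (Suc j)) z)" by (rule prod.atMost_shift)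
    also have "(\<Prod>j<n. Tp p (aa (Suc j)) z) = (\<Prod>j<n. Tp p ((a * q) * q ^ j) z)"
      by (intro prod.cong refl) (simp add: aa_def mult_ac)
    finally show ?thesis unfolding TPprod by (simp add: aa_def)
  qed
  have Tpaz: "Tp p a z \<noteq> 0" using gz by (simp add: Tp_def)
  have hL1': "tfac (a * q * z) q p n \<noteq> 0" "tfac (a * q / z) q p n \<noteq> 0" using hL1 by auto
  have hL2': "tfac (a * b) q p s \<noteq> 0" "tfac (b / a) q p s \<noteq> 0" using hL2 by auto
  have hL3': "tfac (a * d) q p (n - s) \<noteq> 0" "tfac (d / a) q p (n - s) \<noteq> 0" using hL3 by auto
  have LHS: "tfac q q p n * tfac (a ^ 2 * q) q p n
           / (tfac (a * q * z) q p n * tfac (a * q / z) q p n)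
         * (tfac (b * z) q p s * tfac (b / z) q p s
            * tfac (d * z) q p (n - s) * tfac (d / z) q p (n - s))
         / (tfac (a * b) q p s * tfac (b / a) q p s
            * tfac (a * d) q p (n - s) * tfac (d / a) q p (n - s))
       = Pf * Tp p a z * ((\<Prod>i<n. Tp p (bb i) z) / (\<Prod>j\<le>n. Tp p (aa j) z))"
    unfolding Nb Da Pf_def using Tpaz hL1' hL2' hL3' by (simp add: field_simps)
  also have "\<dots> = (\<Sum>k\<le>n. Pf * Tp p a z * (coef p aa bb n k / Tp p (aa k) z))"
    unfolding PFres sum_distrib_left ..
  also have "\<dots> = (\<Sum>k=0..n. q ^ k * theta (a ^ 2 * q ^ (2 * k)) p / theta (a ^ 2) p
           * (tfac (a ^ 2) q p k * tfac (inverse (q ^ n)) q p k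
              * tfac (a * z) q p k * tfac (a / z) q p k
              * tfac (a * q / b) q p k * tfac (a * q / d) q p k
              * tfac (a * b * q ^ s) q p k * tfac (a * d * q ^ (n - s)) q p k)
           / (tfac q q p k * tfac (a ^ 2 * q ^ (n + 1)) q p k
              * tfac (a * q / z) q p k * tfac (a * q * z) q p k
              * tfac (a * b) q p k * tfac (a * d) q p k
              * tfac (a * q / (q ^ s * b)) q p k
              * tfac (a * q * q ^ s / (q ^ n * d)) q p k))"
    unfolding atLeast0AtMost
    apply (intro sum.cong refl)
    subgoal premises prems for k
    proof -
      have k: "k \<le> n" using prems by simp
      have hR2k: "tfac q q p k * tfac (a ^ 2 * q ^ (n + 1)) q p k
                 * tfac (a * q / z) q p k * tfac (a * q * z) q p k
                 * tfac (a * b) q p k * tfac (a * d) q p k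
                 * tfac (a * q / (q ^ s * b)) q p k
                 * tfac (a * q * q ^ s / (q ^ n * d)) q p k \<noteq> 0" using hR2 k by blast
      have Tzk: "Tp p (a * q ^ k) z \<noteq> 0" using Tz[OF k] by (simp add: aa_def)
      show ?thesis
        unfolding Pf_def aa_def bb_def Tp_def
        by (rule KEY[OF p q sn k nz hL2 hL3 hR1 hR2k TQn ga Tzk, symmetric])
    qed
    done
  finally show ?thesis .
qed

lemma tfac_continuous [continuous_intros]:
  assumes p: "norm p < 1" and q: "q \<noteq> 0" and f: "continuous (at x within S) f" and nz: "f x \<noteq> 0"
  shows "continuous (at x within S) (\<lambda>x. tfac (f x) q p k)"
  unfolding tfac_def using q nz by (intro continuous_intros p f) auto

lemma Zset_countable: "countable (range (\<lambda>j. inverse ((p::complex) ^ j)) \<union> range (\<lambda>j. p ^ Suc j))"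
  by simp

lemma sq_preimage_countable:
  assumes "countable Z"
  shows "countable {w :: complex. w * w \<in> Z}"
proof -
  have "{w :: complex. w * w \<in> Z} \<subseteq> csqrt ` Z \<union> (\<lambda>x. - csqrt x) ` Z"
  proof
    fix w :: complex assume "w \<in> {w. w * w \<in> Z}"
    hence Zw: "w * w \<in> Z" by simp
    from csqrt_sq_cases[of w] show "w \<in> csqrt ` Z \<union> (\<lambda>x. - csqrt x) ` Z"
    proof
      assume "csqrt (w * w) = w" hence "w = csqrt (w * w)" by simp
      thus ?thesis using Zw by blast
    next
      assume "csqrt (w * w) = - w" hence "w = - csqrt (w * w)" by simp
      thus ?thesis using Zw by blast
    qed
  qed
  moreover have "countable (csqrt ` Z \<union> (\<lambda>x. - csqrt x) ` Z)" using assms by simp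
  ultimately show ?thesis by (rule countable_subset)
qed

theorem corollary2p7:
  fixes q p a b d z :: complex and n s :: nat
  assumes hq: "0 < norm q" "norm q < 1"
    and hp: "norm p < 1"
    and hs: "s \<le> n"
    and hnz: "a \<noteq> 0" "b \<noteq> 0" "d \<noteq> 0" "z \<noteq> 0"
    and hL1: "tfac (a * q * z) q p n * tfac (a * q / z) q p n \<noteq> 0"
    and hL2: "tfac (a * b) q p s * tfac (b / a) q p s \<noteq> 0"
    and hL3: "tfac (a * d) q p (n - s) * tfac (d / a) q p (n - s) \<noteq> 0"
    and hR1: "theta (a ^ 2) p \<noteq> 0"
    and hR2: "\<forall>k\<le>n. tfac q q p k * tfac (a ^ 2 * q ^ (n + 1)) q p k
               * tfac (a * q / z) q p k * tfac (a * q * z) q p k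
               * tfac (a * b) q p k * tfac (a * d) q p k
               * tfac (a * q / (q ^ s * b)) q p k
               * tfac (a * q * q ^ s / (q ^ n * d)) q p k \<noteq> 0"
  shows "tfac q q p n * tfac (a ^ 2 * q) q p n
           / (tfac (a * q * z) q p n * tfac (a * q / z) q p n)
         * (tfac (b * z) q p s * tfac (b / z) q p s
            * tfac (d * z) q p (n - s) * tfac (d / z) q p (n - s))
         / (tfac (a * b) q p s * tfac (b / a) q p s
            * tfac (a * d) q p (n - s) * tfac (d / a) q p (n - s))
       = (\<Sum>k=0..n. q ^ k * theta (a ^ 2 * q ^ (2 * k)) p / theta (a ^ 2) p
           * (tfac (a ^ 2) q p k * tfac (inverse (q ^ n)) q p k
              * tfac (a * z) q p k * tfac (a / z) q p k
              * tfac (a * q / b) q p k * tfac (a * q / d) q p k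
              * tfac (a * b * q ^ s) q p k * tfac (a * d * q ^ (n - s)) q p k)
           / (tfac q q p k * tfac (a ^ 2 * q ^ (n + 1)) q p k
              * tfac (a * q / z) q p k * tfac (a * q * z) q p k
              * tfac (a * b) q p k * tfac (a * d) q p k
              * tfac (a * q / (q ^ s * b)) q p k
              * tfac (a * q * q ^ s / (q ^ n * d)) q p k))"
proof -
  have q0: "q \<noteq> 0" using hq by auto
  define Z where "Z = range (\<lambda>j. inverse (p ^ j)) \<union> range (\<lambda>j. p ^ Suc j)"
  have cZ: "countable Z" unfolding Z_def by simp
  have thZ: "theta x p = 0 \<Longrightarrow> x \<in> Z" for x using theta_zero_set[OF hp] unfolding Z_def by blast
  define C where "C = {0} \<union> {w. theta (w * z) p * theta (w / z) p = 0} \<union> (\<Union>m\<in>{..2*n}. {w. theta (w ^ 2 * q ^ m) p = 0})"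
  have cC: "countable C"
  proof -
    have c1: "countable {w. theta (w * z) p * theta (w / z) p = 0}"
    proof (rule countable_subset)
      show "{w. theta (w * z) p * theta (w / z) p = 0} \<subseteq> (\<lambda>x. x / z) ` Z \<union> (\<lambda>x. x * z) ` Z"
      proof
        fix w assume "w \<in> {w. theta (w * z) p * theta (w / z) p = 0}"
        hence "theta (w * z) p = 0 \<or> theta (w / z) p = 0" by simp
        thus "w \<in> (\<lambda>x. x / z) ` Z \<union> (\<lambda>x. x * z) ` Z"
        proof
          assume "theta (w * z) p = 0"
          hence "w * z \<in> Z" by (rule thZ)
          moreover have "w = (w * z) / z" using hnz by simp
          ultimately show ?thesis by blast
        next
          assume "theta (w / z) p = 0"
          hence "w / z \<in> Z" by (rule thZ)
          moreover have "w = (w / z) * z" using hnz by simp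
          ultimately show ?thesis by blast
        qed
      qed
      show "countable ((\<lambda>x. x / z) ` Z \<union> (\<lambda>x. x * z) ` Z)" using cZ by simp
    qed
    have c2: "countable {w. theta (w ^ 2 * q ^ m) p = 0}" for m
    proof (rule countable_subset)
      show "{w. theta (w ^ 2 * q ^ m) p = 0} \<subseteq> {w. w * w \<in> (\<lambda>x. x / q ^ m) ` Z}"
      proof
        fix w assume "w \<in> {w. theta (w ^ 2 * q ^ m) p = 0}"
        hence "w ^ 2 * q ^ m \<in> Z" using thZ by simp
        moreover have "w * w = (w ^ 2 * q ^ m) / q ^ m" using q0 by (simp add: power2_eq_square)
        ultimately show "w \<in> {w. w * w \<in> (\<lambda>x. x / q ^ m) ` Z}" by blast
      qed
      show "countable {w. w * w \<in> (\<lambda>x. x / q ^ m) ` Z}" using cZ by (intro sq_preimage_countable) simp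
    qed
    show ?thesis unfolding C_def using c1 c2 by auto
  qed
  obtain X where X: "\<And>m. X m \<notin> C" and lim: "X \<longlonglongrightarrow> a" using countable_avoid_seq[OF cC] by blast
  define LH where "LH = (\<lambda>w. tfac q q p n * tfac (w ^ 2 * q) q p n
           / (tfac (w * q * z) q p n * tfac (w * q / z) q p n)
         * (tfac (b * z) q p s * tfac (b / z) q p s
            * tfac (d * z) q p (n - s) * tfac (d / z) q p (n - s))
         / (tfac (w * b) q p s * tfac (b / w) q p s
            * tfac (w * d) q p (n - s) * tfac (d / w) q p (n - s)))"
  define RH where "RH = (\<lambda>w. (\<Sum>k=0..n. q ^ k * theta (w ^ 2 * q ^ (2 * k)) p / theta (w ^ 2) p
           * (tfac (w ^ 2) q p k * tfac (inverse (q ^ n)) q p k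
              * tfac (w * z) q p k * tfac (w / z) q p k
              * tfac (w * q / b) q p k * tfac (w * q / d) q p k
              * tfac (w * b * q ^ s) q p k * tfac (w * d * q ^ (n - s)) q p k)
           / (tfac q q p k * tfac (w ^ 2 * q ^ (n + 1)) q p k
              * tfac (w * q / z) q p k * tfac (w * q * z) q p k
              * tfac (w * b) q p k * tfac (w * d) q p k
              * tfac (w * q / (q ^ s * b)) q p k
              * tfac (w * q * q ^ s / (q ^ n * d)) q p k)))"
  define GG where "GG = (\<lambda>w. (tfac (w * q * z) q p n * tfac (w * q / z) q p n)
      * (tfac (w * b) q p s * tfac (b / w) q p s) * (tfac (w * d) q p (n - s) * tfac (d / w) q p (n - s))
      * theta (w ^ 2) p * (\<Prod>k\<le>n. tfac q q p k * tfac (w ^ 2 * q ^ (n + 1)) q p k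
               * tfac (w * q / z) q p k * tfac (w * q * z) q p k
               * tfac (w * b) q p k * tfac (w * d) q p k
               * tfac (w * q / (q ^ s * b)) q p k
               * tfac (w * q * q ^ s / (q ^ n * d)) q p k))"
  have GGa: "GG a \<noteq> 0" unfolding GG_def using hL1 hL2 hL3 hR1 hR2 by auto
  have cGG: "isCont GG a" unfolding GG_def using hnz q0
    by (intro continuous_intros hp) auto
  have "(\<lambda>m. GG (X m)) \<longlonglongrightarrow> GG a" using cGG lim by (rule isCont_tendsto_compose)
  hence evGG: "eventually (\<lambda>m. GG (X m) \<noteq> 0) sequentially" using GGa tendsto_imp_eventually_ne by blast
  have ev: "eventually (\<lambda>m. LH (X m) = RH (X m)) sequentially"
    using evGG
  proof eventually_elim
    case (elim m)
    define w where "w = X m"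
    have wC: "w \<notin> C" using X by (simp add: w_def)
    have GGw: "GG w \<noteq> 0" using elim by (simp add: w_def)
    have w0: "w \<noteq> 0" using wC by (auto simp: C_def)
    have gz: "theta (w * z) p * theta (w / z) p \<noteq> 0" using wC by (auto simp: C_def)
    have ga: "\<And>m'. m' \<le> 2 * n \<Longrightarrow> theta (w ^ 2 * q ^ m') p \<noteq> 0" using wC by (auto simp: C_def)
    have h1: "tfac (w * q * z) q p n * tfac (w * q / z) q p n \<noteq> 0"
      and h2: "tfac (w * b) q p s * tfac (b / w) q p s \<noteq> 0"
      and h3: "tfac (w * d) q p (n - s) * tfac (d / w) q p (n - s) \<noteq> 0"
      and h4: "theta (w ^ 2) p \<noteq> 0"
      and h5: "\<forall>k\<le>n. tfac q q p k * tfac (w ^ 2 * q ^ (n + 1)) q p k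
               * tfac (w * q / z) q p k * tfac (w * q * z) q p k
               * tfac (w * b) q p k * tfac (w * d) q p k
               * tfac (w * q / (q ^ s * b)) q p k
               * tfac (w * q * q ^ s / (q ^ n * d)) q p k \<noteq> 0"
      using GGw unfolding GG_def by auto
    show "LH (X m) = RH (X m)" unfolding LH_def RH_def w_def[symmetric]
      by (rule MainG[OF q0 hp hs w0 hnz(2,3,4) h1 h2 h3 h4 h5 gz ga])
  qed
  have cLH: "isCont LH a" unfolding LH_def using hnz q0 hL1 hL2 hL3
    by (intro continuous_intros hp) auto
  have cRH: "isCont RH a" unfolding RH_def using hnz q0 hR1 hR2
    by (intro continuous_intros hp) auto
  have t1: "(\<lambda>m. LH (X m)) \<longlonglongrightarrow> LH a" using cLH lim by (rule isCont_tendsto_compose)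
  have t2: "(\<lambda>m. RH (X m)) \<longlonglongrightarrow> RH a" using cRH lim by (rule isCont_tendsto_compose)
  have "(\<lambda>m. RH (X m)) \<longlonglongrightarrow> LH a" by (rule Lim_transform_eventually[OF t1 ev])
  hence "LH a = RH a" using t2 LIMSEQ_unique by blast
  thus ?thesis unfolding LH_def RH_def .
qed

end
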